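(* Let $R$ be a commutative ring of Krull dimension $0$ which is integral over an Artinian subring $R_0$, write $\mathcal{F}=\mathcal{F}(R_0,R)$, and let $n\ge 1$. If $R$ is not Noetherian, then the ring of Artinian power series $S=\mathcal{F}\llbracket X_1,\ldots,X_n\rrbracket$ is not Noetherian, and $S$ is strictly contained in the formal power series ring $R\llbracket X_1,\ldots,X_n\rrbracket$.
   Context: All rings are commutative with identity, and subrings share the identity. For a $0$-dimensional ring $R$ and an Artinian subring $R_0\subseteq R$ such that $R$ is integral over $R_0$, let $\mathcal{F}(R_0,R)=\{R_\alpha\}$ denote the family of all subrings of $R$ that are finitely generated as $R_0$-algebras; this family is directed, each $R_\alpha$ is Artinian, and $R=\bigcup_\alpha R_\alpha$. The ring of Artinian power series $\mathcal{F}\llbracket X_1,\ldots,X_n\rrbracket$ is the set of all $f\in R\llbracket X_1,\ldots,X_n\rrbracket$ such that all coefficients of $f$ lie in a single $R_\alpha\in\mathcal{F}$; equivalently, $\mathcal{F}\llbracket X_1,\ldots,X_n\rrbracket=\bigcup_\alpha R_\alpha\llbracket X_1,\ldots,X_n\rrbracket$, which is a subring of $R\llbracket X_1,\ldots,X_n\rrbracket$. *)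

theory Defs
  imports "HOL-Algebra.Algebra"
begin

text \<open>Noetherian: ascending chain condition on ideals.  The ring axioms are
  implicit in the notion of ideal (the locale ideal contains ring R).\<close>
definition noetherian :: "('a, 'b) ring_scheme \<Rightarrow> bool" where
  "noetherian R \<longleftrightarrow>
     (\<forall>I :: nat \<Rightarrow> 'a set. (\<forall>k. ideal (I k) R) \<and> (\<forall>k. I k \<subseteq> I (Suc k))
        \<longrightarrow> (\<exists>m. \<forall>k\<ge>m. I k = I m))"

definition artinian :: "('a, 'b) ring_scheme \<Rightarrow> bool" where
  "artinian R \<longleftrightarrow> ring R \<and>
     (\<forall>I :: nat \<Rightarrow> 'a set. (\<forall>k. ideal (I k) R) \<and> (\<forall>k. I (Suc k) \<subseteq> I k)
        \<longrightarrow> (\<exists>m. \<forall>k\<ge>m. I k = I m))"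

definition krull_dim_zero :: "('a, 'b) ring_scheme \<Rightarrow> bool" where
  "krull_dim_zero R \<longleftrightarrow> (\<exists>P. primeideal P R) \<and> (\<forall>P. primeideal P R \<longrightarrow> maximalideal P R)"

definition integral_over :: "('a, 'b) ring_scheme \<Rightarrow> 'a set \<Rightarrow> bool" where
  "integral_over R R0 \<longleftrightarrow>
     (\<forall>x\<in>carrier R. \<exists>(d::nat) c. (\<forall>i<d. c i \<in> R0) \<and>
        x [^]\<^bsub>R\<^esub> d \<oplus>\<^bsub>R\<^esub> (\<Oplus>\<^bsub>R\<^esub> i\<in>{..<d}. c i \<otimes>\<^bsub>R\<^esub> x [^]\<^bsub>R\<^esub> i) = \<zero>\<^bsub>R\<^esub>)"

definition fg_family :: "('a, 'b) ring_scheme \<Rightarrow> 'a set \<Rightarrow> 'a set set" where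
  "fg_family R R0 = {generate_ring R (R0 \<union> E) | E. finite E \<and> E \<subseteq> carrier R}"

text \<open>Exponent vectors of monomials in the variables X_1..X_n (indexed 0..n-1).\<close>
definition expvec :: "nat \<Rightarrow> (nat \<Rightarrow> nat) set" where
  "expvec n = {m. \<forall>i\<ge>n. m i = 0}"

definition PS :: "('a, 'b) ring_scheme \<Rightarrow> nat \<Rightarrow> ((nat \<Rightarrow> nat) \<Rightarrow> 'a) ring" where
  "PS R n = \<lparr>
     carrier = {f. (\<forall>m. f m \<in> carrier R) \<and> (\<forall>m. m \<notin> expvec n \<longrightarrow> f m = \<zero>\<^bsub>R\<^esub>)},
     monoid.mult = (\<lambda>f g m. if m \<in> expvec n then
         (\<Oplus>\<^bsub>R\<^esub> a\<in>{a. \<forall>i. a i \<le> m i}. f a \<otimes>\<^bsub>R\<^esub> g (\<lambda>i. m i - a i))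
       else \<zero>\<^bsub>R\<^esub>),
     monoid.one = (\<lambda>m. if (\<forall>i. m i = 0) then \<one>\<^bsub>R\<^esub> else \<zero>\<^bsub>R\<^esub>),
     ring.zero = (\<lambda>m. \<zero>\<^bsub>R\<^esub>),
     ring.add = (\<lambda>f g m. f m \<oplus>\<^bsub>R\<^esub> g m) \<rparr>"

definition artinian_PS :: "('a, 'b) ring_scheme \<Rightarrow> 'a set \<Rightarrow> nat \<Rightarrow> ((nat \<Rightarrow> nat) \<Rightarrow> 'a) set" where
  "artinian_PS R R0 n =
     (\<Union>Ra\<in>fg_family R R0. {f \<in> carrier (PS R n). \<forall>m. f m \<in> Ra})"

end

theory Submission
  imports Defs
begin


definition dset :: "(nat \<Rightarrow> nat) \<Rightarrow> (nat \<Rightarrow> nat) set" where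
  "dset m = {a. \<forall>i. a i \<le> m i}"

lemma expvec_zero[simp]: "(\<lambda>i. 0) \<in> expvec n"
  by (simp add: expvec_def)

lemma dset_expvec: "m \<in> expvec n \<Longrightarrow> a \<in> dset m \<Longrightarrow> a \<in> expvec n"
proof -
  assume m: "m \<in> expvec n" and a: "a \<in> dset m"
  have "a i = 0" if "i \<ge> n" for i
  proof -
    have "m i = 0" using m that by (simp add: expvec_def)
    moreover have "a i \<le> m i" using a by (simp add: dset_def)
    ultimately show ?thesis by simp
  qed
  then show ?thesis by (simp add: expvec_def)
qed

lemma diff_expvec: "m \<in> expvec n \<Longrightarrow> (\<lambda>i. m i - a i) \<in> expvec n"
  unfolding expvec_def by auto

lemma finite_dset: assumes "m \<in> expvec n" shows "finite (dset m)"
proof -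
  let ?M = "sum m {..<n}"
  let ?F = "\<lambda>xs i. if i < n then xs ! i else (0::nat)"
  have "dset m \<subseteq> ?F ` {xs. set xs \<subseteq> {..?M} \<and> length xs = n}"
  proof
    fix a assume a: "a \<in> dset m"
    have "a = ?F (map a [0..<n])"
      using a assms unfolding dset_def expvec_def by (auto intro!: ext) (metis le_zero_eq not_le)
    moreover have "set (map a [0..<n]) \<subseteq> {..?M}"
    proof
      fix x assume "x \<in> set (map a [0..<n])"
      then obtain i where i: "i < n" "x = a i" by auto
      have "m i \<le> ?M" using i by (intro member_le_sum) auto
      then show "x \<in> {..?M}" using a i unfolding dset_def by (auto intro: le_trans)
    qed
    ultimately show "a \<in> ?F ` {xs. set xs \<subseteq> {..?M} \<and> length xs = n}"
      by (intro image_eqI[where x="map a [0..<n]"]) auto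
  qed
  moreover have "finite {xs. set xs \<subseteq> {..?M} \<and> length xs = n}"
    by (rule finite_lists_length_eq) auto
  ultimately show ?thesis by (meson finite_imageI finite_subset)
qed

lemma dset_zero: "dset (\<lambda>i. 0) = {\<lambda>i. 0}"
  unfolding dset_def by auto

lemma PS_carrier: "f \<in> carrier (PS R n) \<longleftrightarrow> (\<forall>m. f m \<in> carrier R) \<and> (\<forall>m. m \<notin> expvec n \<longrightarrow> f m = \<zero>\<^bsub>R\<^esub>)"
  by (simp add: PS_def)

lemma PS_mult: "f \<otimes>\<^bsub>PS R n\<^esub> g = (\<lambda>m. if m \<in> expvec n then
         (\<Oplus>\<^bsub>R\<^esub> a\<in>dset m. f a \<otimes>\<^bsub>R\<^esub> g (\<lambda>i. m i - a i)) else \<zero>\<^bsub>R\<^esub>)"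
  unfolding dset_def by (simp add: PS_def)

lemma PS_one: "\<one>\<^bsub>PS R n\<^esub> = (\<lambda>m. if (\<forall>i. m i = 0) then \<one>\<^bsub>R\<^esub> else \<zero>\<^bsub>R\<^esub>)"
  by (simp add: PS_def)

lemma PS_zero: "\<zero>\<^bsub>PS R n\<^esub> = (\<lambda>m. \<zero>\<^bsub>R\<^esub>)"
  by (simp add: PS_def)

lemma PS_add: "f \<oplus>\<^bsub>PS R n\<^esub> g = (\<lambda>m. f m \<oplus>\<^bsub>R\<^esub> g m)"
  by (simp add: PS_def)

context abelian_monoid
begin

lemma finsum_Sigma:
  assumes "finite A" "\<And>x. x \<in> A \<Longrightarrow> finite (B x)"
    and "\<And>x y. x \<in> A \<Longrightarrow> y \<in> B x \<Longrightarrow> H x y \<in> carrier G"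
  shows "(\<Oplus>x\<in>A. \<Oplus>y\<in>B x. H x y) = (\<Oplus>p\<in>Sigma A B. H (fst p) (snd p))"
proof -
  have S: "Sigma A B = (\<Union>x\<in>A. Pair x ` B x)" by auto
  have "(\<Oplus>p\<in>Sigma A B. H (fst p) (snd p)) = (\<Oplus>x\<in>A. \<Oplus>p\<in>Pair x ` B x. H (fst p) (snd p))"
    unfolding S
    by (rule add.finprod_UN_disjoint) (use assms in \<open>auto simp: pairwise_def disjnt_def\<close>)
  also have "\<dots> = (\<Oplus>x\<in>A. \<Oplus>y\<in>B x. H x y)"
  proof (rule finsum_cong')
    fix x assume x: "x \<in> A"
    show "(\<Oplus>p\<in>Pair x ` B x. H (fst p) (snd p)) = (\<Oplus>y\<in>B x. H x y)"
      by (subst finsum_reindex) (use assms x in \<open>auto simp: inj_on_def\<close>)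
  qed (use assms in \<open>auto intro: finsum_closed\<close>)
  finally show ?thesis by simp
qed

end

context cring
begin

lemma PS_mult_closed:
  assumes "f \<in> carrier (PS R n)" "g \<in> carrier (PS R n)"
  shows "f \<otimes>\<^bsub>PS R n\<^esub> g \<in> carrier (PS R n)"
  using assms unfolding PS_carrier PS_mult by (auto intro!: finsum_closed)

lemma PS_coeff: "f \<in> carrier (PS R n) \<Longrightarrow> f m \<in> carrier R"
  by (simp add: PS_carrier)

lemma PS_mult_assoc:
  assumes f: "f \<in> carrier (PS R n)" and g: "g \<in> carrier (PS R n)" and h: "h \<in> carrier (PS R n)"
  shows "(f \<otimes>\<^bsub>PS R n\<^esub> g) \<otimes>\<^bsub>PS R n\<^esub> h = f \<otimes>\<^bsub>PS R n\<^esub> (g \<otimes>\<^bsub>PS R n\<^esub> h)"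
proof
  fix m
  note cf = PS_coeff[OF f] and cg = PS_coeff[OF g] and ch = PS_coeff[OF h]
  show "((f \<otimes>\<^bsub>PS R n\<^esub> g) \<otimes>\<^bsub>PS R n\<^esub> h) m = (f \<otimes>\<^bsub>PS R n\<^esub> (g \<otimes>\<^bsub>PS R n\<^esub> h)) m"
  proof (cases "m \<in> expvec n")
    case False then show ?thesis by (simp add: PS_mult)
  next
    case True
    have fin: "finite (dset m)" using finite_dset[OF True] .
    have fin2: "\<And>a. a \<in> dset m \<Longrightarrow> finite (dset a)"
      using finite_dset dset_expvec True by blast
    have fin3: "\<And>b. finite (dset (\<lambda>i. m i - b i))"
      using finite_dset diff_expvec True by blast
    let ?F = "\<lambda>a b. f b \<otimes> g (\<lambda>i. a i - b i) \<otimes> h (\<lambda>i. m i - a i)"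
    let ?G = "\<lambda>b c. f b \<otimes> (g c \<otimes> h (\<lambda>i. (m i - b i) - c i))"
    have "((f \<otimes>\<^bsub>PS R n\<^esub> g) \<otimes>\<^bsub>PS R n\<^esub> h) m
        = (\<Oplus>a\<in>dset m. (\<Oplus>b\<in>dset a. f b \<otimes> g (\<lambda>i. a i - b i)) \<otimes> h (\<lambda>i. m i - a i))"
      using True dset_expvec[OF True] by (auto simp: PS_mult cf cg ch intro!: finsum_cong' finsum_closed)
    also have "\<dots> = (\<Oplus>a\<in>dset m. \<Oplus>b\<in>dset a. ?F a b)"
      by (intro finsum_cong' refl finsum_ldistr) (auto simp: fin2 cf cg ch)
    also have "\<dots> = (\<Oplus>p\<in>Sigma (dset m) dset. ?F (fst p) (snd p))"
      by (rule finsum_Sigma) (auto simp: fin fin2 cf cg ch)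
    also have "\<dots> = (\<Oplus>q\<in>Sigma (dset m) (\<lambda>b. dset (\<lambda>i. m i - b i)). ?G (fst q) (snd q))"
    proof -
      let ?phi = "\<lambda>q. ((\<lambda>i. fst q i + snd q i), fst q)"
      have img: "?phi ` Sigma (dset m) (\<lambda>b. dset (\<lambda>i. m i - b i)) = Sigma (dset m) dset"
      proof (rule equalityI)
        show "?phi ` Sigma (dset m) (\<lambda>b. dset (\<lambda>i. m i - b i)) \<subseteq> Sigma (dset m) dset"
          by (clarsimp simp: dset_def, (erule_tac x=i in allE)+, arith)
      next
        show "Sigma (dset m) dset \<subseteq> ?phi ` Sigma (dset m) (\<lambda>b. dset (\<lambda>i. m i - b i))"
        proof
          fix p assume p: "p \<in> Sigma (dset m) dset"
          obtain a b where ab: "p = (a, b)" by force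
          have "(b, (\<lambda>i. a i - b i)) \<in> Sigma (dset m) (\<lambda>b. dset (\<lambda>i. m i - b i))"
            using p ab by (auto simp: dset_def) (meson order_trans, meson diff_le_mono)
          moreover have "p = ?phi (b, (\<lambda>i. a i - b i))" using p ab by (auto simp: dset_def)
          ultimately show "p \<in> ?phi ` Sigma (dset m) (\<lambda>b. dset (\<lambda>i. m i - b i))" by blast
        qed
      qed
      have inj: "inj_on ?phi (Sigma (dset m) (\<lambda>b. dset (\<lambda>i. m i - b i)))"
        by (auto simp: inj_on_def fun_eq_iff)
      have "(\<Oplus>p\<in>Sigma (dset m) dset. ?F (fst p) (snd p))
          = (\<Oplus>q\<in>Sigma (dset m) (\<lambda>b. dset (\<lambda>i. m i - b i)). ?F (fst (?phi q)) (snd (?phi q)))"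
        unfolding img[symmetric] by (rule finsum_reindex) (auto simp: cf cg ch inj)
      also have "\<dots> = (\<Oplus>q\<in>Sigma (dset m) (\<lambda>b. dset (\<lambda>i. m i - b i)). ?G (fst q) (snd q))"
      proof (rule finsum_cong')
        fix q assume "q \<in> Sigma (dset m) (\<lambda>b. dset (\<lambda>i. m i - b i))"
        have e1: "(\<lambda>i. fst q i + snd q i - fst q i) = snd q" by auto
        have e2: "(\<lambda>i. m i - (fst q i + snd q i)) = (\<lambda>i. m i - fst q i - snd q i)" by auto
        show "?F (fst (?phi q)) (snd (?phi q)) = ?G (fst q) (snd q)"
          by (simp only: fst_conv snd_conv e1 e2) (simp add: m_assoc cf cg ch)
      qed (auto simp: cf cg ch)
      finally show ?thesis .
    qed
    also have "\<dots> = (\<Oplus>b\<in>dset m. \<Oplus>c\<in>dset (\<lambda>i. m i - b i). ?G b c)"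
      by (rule finsum_Sigma[symmetric]) (auto simp: fin fin3 cf cg ch)
    also have "\<dots> = (\<Oplus>b\<in>dset m. f b \<otimes> (\<Oplus>c\<in>dset (\<lambda>i. m i - b i). g c \<otimes> h (\<lambda>i. (m i - b i) - c i)))"
      by (intro finsum_cong' refl finsum_rdistr[symmetric]) (auto simp: fin3 cf cg ch intro!: finsum_closed)
    also have "\<dots> = (f \<otimes>\<^bsub>PS R n\<^esub> (g \<otimes>\<^bsub>PS R n\<^esub> h)) m"
      using True diff_expvec[OF True] by (auto simp: PS_mult cf cg ch intro!: finsum_cong' finsum_closed)
    finally show ?thesis .
  qed
qed


lemma PS_mult_comm:
  assumes f: "f \<in> carrier (PS R n)" and g: "g \<in> carrier (PS R n)"
  shows "f \<otimes>\<^bsub>PS R n\<^esub> g = g \<otimes>\<^bsub>PS R n\<^esub> f"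
proof
  fix m
  note cf = PS_coeff[OF f] and cg = PS_coeff[OF g]
  show "(f \<otimes>\<^bsub>PS R n\<^esub> g) m = (g \<otimes>\<^bsub>PS R n\<^esub> f) m"
  proof (cases "m \<in> expvec n")
    case False then show ?thesis by (simp add: PS_mult)
  next
    case True
    let ?h = "\<lambda>a. (\<lambda>i. m i - a i)"
    have img: "?h ` dset m = dset m"
    proof (rule equalityI)
      show "?h ` dset m \<subseteq> dset m" by (auto simp: dset_def)
      show "dset m \<subseteq> ?h ` dset m"
      proof
        fix a assume a: "a \<in> dset m"
        have "a = ?h (?h a)" using a by (auto simp: dset_def fun_eq_iff)
        moreover have "?h a \<in> dset m" by (auto simp: dset_def)
        ultimately show "a \<in> ?h ` dset m" by (rule image_eqI)
      qed
    qed
    have inj: "inj_on ?h (dset m)"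
    proof (rule inj_onI)
      fix a b assume "a \<in> dset m" "b \<in> dset m" "?h a = ?h b"
      then show "a = b" by (auto simp: dset_def fun_eq_iff) (metis diff_diff_cancel)
    qed
    have "(g \<otimes>\<^bsub>PS R n\<^esub> f) m = (\<Oplus>a\<in>?h ` dset m. g a \<otimes> f (?h a))"
      using True img by (simp add: PS_mult)
    also have "\<dots> = (\<Oplus>a\<in>dset m. g (?h a) \<otimes> f (?h (?h a)))"
      by (rule finsum_reindex) (auto simp: cf cg inj)
    also have "\<dots> = (\<Oplus>a\<in>dset m. f a \<otimes> g (?h a))"
    proof (rule finsum_cong')
      fix a assume a: "a \<in> dset m"
      have "?h (?h a) = a" using a by (auto simp: dset_def fun_eq_iff)
      then show "g (?h a) \<otimes> f (?h (?h a)) = f a \<otimes> g (?h a)" by (simp add: m_comm cf cg)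
    qed (auto simp: cf cg)
    also have "\<dots> = (f \<otimes>\<^bsub>PS R n\<^esub> g) m" using True by (simp add: PS_mult)
    finally show ?thesis by simp
  qed
qed

lemma PS_one_closed: "\<one>\<^bsub>PS R n\<^esub> \<in> carrier (PS R n)"
  unfolding PS_carrier PS_one
proof (intro conjI allI impI)
  fix m assume "m \<notin> expvec n"
  then have "\<not> (\<forall>i. m i = 0)" by (auto simp: expvec_def)
  then show "(if \<forall>i. m i = 0 then \<one> else \<zero>) = \<zero>" by (simp only: if_False)
qed auto

lemma PS_l_one:
  assumes g: "g \<in> carrier (PS R n)"
  shows "\<one>\<^bsub>PS R n\<^esub> \<otimes>\<^bsub>PS R n\<^esub> g = g"
proof
  fix m
  note cg = PS_coeff[OF g]
  show "(\<one>\<^bsub>PS R n\<^esub> \<otimes>\<^bsub>PS R n\<^esub> g) m = g m"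
  proof (cases "m \<in> expvec n")
    case False then show ?thesis using g by (simp add: PS_mult PS_carrier)
  next
    case True
    have z: "(\<lambda>i. 0::nat) \<in> dset m" by (simp add: dset_def)
    have "(\<one>\<^bsub>PS R n\<^esub> \<otimes>\<^bsub>PS R n\<^esub> g) m
        = (\<Oplus>a\<in>dset m. if (\<lambda>i. 0) = a then g (\<lambda>i. m i - a i) else \<zero>)"
      using True by (auto simp: PS_mult PS_one cg fun_eq_iff intro!: finsum_cong')
    also have "\<dots> = g (\<lambda>i. m i - 0)"
      by (rule finsum_singleton[OF z finite_dset[OF True]]) (auto simp: cg)
    finally show ?thesis by simp
  qed
qed

lemma PS_l_distr:
  assumes f: "f \<in> carrier (PS R n)" and g: "g \<in> carrier (PS R n)" and h: "h \<in> carrier (PS R n)"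
  shows "(f \<oplus>\<^bsub>PS R n\<^esub> g) \<otimes>\<^bsub>PS R n\<^esub> h = f \<otimes>\<^bsub>PS R n\<^esub> h \<oplus>\<^bsub>PS R n\<^esub> g \<otimes>\<^bsub>PS R n\<^esub> h"
proof
  fix m
  note cf = PS_coeff[OF f] and cg = PS_coeff[OF g] and ch = PS_coeff[OF h]
  show "((f \<oplus>\<^bsub>PS R n\<^esub> g) \<otimes>\<^bsub>PS R n\<^esub> h) m = (f \<otimes>\<^bsub>PS R n\<^esub> h \<oplus>\<^bsub>PS R n\<^esub> g \<otimes>\<^bsub>PS R n\<^esub> h) m"
  proof (cases "m \<in> expvec n")
    case False then show ?thesis by (simp add: PS_mult PS_add)
  next
    case True
    have "((f \<oplus>\<^bsub>PS R n\<^esub> g) \<otimes>\<^bsub>PS R n\<^esub> h) m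
       = (\<Oplus>a\<in>dset m. f a \<otimes> h (\<lambda>i. m i - a i) \<oplus> g a \<otimes> h (\<lambda>i. m i - a i))"
      using True by (auto simp: PS_mult PS_add cf cg ch l_distr intro!: finsum_cong')
    also have "\<dots> = (\<Oplus>a\<in>dset m. f a \<otimes> h (\<lambda>i. m i - a i)) \<oplus> (\<Oplus>a\<in>dset m. g a \<otimes> h (\<lambda>i. m i - a i))"
      by (rule finsum_addf) (auto simp: cf cg ch)
    also have "\<dots> = (f \<otimes>\<^bsub>PS R n\<^esub> h \<oplus>\<^bsub>PS R n\<^esub> g \<otimes>\<^bsub>PS R n\<^esub> h) m"
      using True by (simp add: PS_mult PS_add)
    finally show ?thesis .
  qed
qed

lemma PS_add_closed:
  "f \<in> carrier (PS R n) \<Longrightarrow> g \<in> carrier (PS R n) \<Longrightarrow> f \<oplus>\<^bsub>PS R n\<^esub> g \<in> carrier (PS R n)"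
  by (simp add: PS_carrier PS_add)

lemma PS_zero_closed: "\<zero>\<^bsub>PS R n\<^esub> \<in> carrier (PS R n)"
  by (simp add: PS_carrier PS_zero)

lemma PS_neg_closed: "f \<in> carrier (PS R n) \<Longrightarrow> (\<lambda>m. \<ominus> f m) \<in> carrier (PS R n)"
  by (simp add: PS_carrier)

lemma PS_abelian_group: "abelian_group (PS R n)"
proof (rule abelian_groupI)
  fix x assume x: "x \<in> carrier (PS R n)"
  show "\<exists>y\<in>carrier (PS R n). y \<oplus>\<^bsub>PS R n\<^esub> x = \<zero>\<^bsub>PS R n\<^esub>"
    using x PS_neg_closed[OF x] by (intro bexI[where x="\<lambda>m. \<ominus> x m"]) (auto simp: PS_add PS_zero PS_carrier l_neg)
next
  fix x y z assume "x \<in> carrier (PS R n)" "y \<in> carrier (PS R n)" "z \<in> carrier (PS R n)"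
  then show "x \<oplus>\<^bsub>PS R n\<^esub> y \<oplus>\<^bsub>PS R n\<^esub> z = x \<oplus>\<^bsub>PS R n\<^esub> (y \<oplus>\<^bsub>PS R n\<^esub> z)"
    by (intro ext) (simp add: PS_add PS_carrier a_assoc)
next
  fix x y assume "x \<in> carrier (PS R n)" "y \<in> carrier (PS R n)"
  then show "x \<oplus>\<^bsub>PS R n\<^esub> y = y \<oplus>\<^bsub>PS R n\<^esub> x"
    by (intro ext) (simp add: PS_add PS_carrier a_comm)
qed (auto simp: PS_add_closed PS_zero_closed PS_add PS_zero PS_carrier)

lemma PS_cring: "cring (PS R n)"
proof (rule cringI)
  show "abelian_group (PS R n)" by (rule PS_abelian_group)
  show "comm_monoid (PS R n)"
  proof (rule comm_monoidI)
    fix x y z assume "x \<in> carrier (PS R n)" "y \<in> carrier (PS R n)" "z \<in> carrier (PS R n)"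
    then show "x \<otimes>\<^bsub>PS R n\<^esub> y \<otimes>\<^bsub>PS R n\<^esub> z = x \<otimes>\<^bsub>PS R n\<^esub> (y \<otimes>\<^bsub>PS R n\<^esub> z)"
      by (rule PS_mult_assoc)
  next
    fix x assume "x \<in> carrier (PS R n)"
    then show "\<one>\<^bsub>PS R n\<^esub> \<otimes>\<^bsub>PS R n\<^esub> x = x" by (rule PS_l_one)
  next
    fix x y assume "x \<in> carrier (PS R n)" "y \<in> carrier (PS R n)"
    then show "x \<otimes>\<^bsub>PS R n\<^esub> y = y \<otimes>\<^bsub>PS R n\<^esub> x" by (rule PS_mult_comm)
  qed (auto simp: PS_mult_closed PS_one_closed)
qed (rule PS_l_distr)

lemma PS_a_inv:
  assumes f: "f \<in> carrier (PS R n)"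
  shows "\<ominus>\<^bsub>PS R n\<^esub> f = (\<lambda>m. \<ominus> f m)"
proof -
  interpret P: abelian_group "PS R n" by (rule PS_abelian_group)
  show ?thesis
    by (rule P.minus_equality) (use f PS_neg_closed[OF f] in \<open>auto simp: PS_add PS_zero PS_carrier l_neg\<close>)
qed

lemma PS_mult_zero_coeff:
  assumes f: "f \<in> carrier (PS R n)" and g: "g \<in> carrier (PS R n)"
  shows "(f \<otimes>\<^bsub>PS R n\<^esub> g) (\<lambda>i. 0) = f (\<lambda>i. 0) \<otimes> g (\<lambda>i. 0)"
  by (simp add: PS_mult dset_zero PS_coeff[OF f] PS_coeff[OF g])

end



definition DCC :: "('a, 'b) ring_scheme \<Rightarrow> bool" where
  "DCC R \<longleftrightarrow> (\<forall>I :: nat \<Rightarrow> 'a set. (\<forall>k. ideal (I k) R) \<and> (\<forall>k. I (Suc k) \<subseteq> I k)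
        \<longrightarrow> (\<exists>m. \<forall>k\<ge>m. I k = I m))"

definition ACCI :: "('a, 'b) ring_scheme \<Rightarrow> 'a set \<Rightarrow> 'a set \<Rightarrow> bool" where
  "ACCI R P Q \<longleftrightarrow> (\<forall>L :: nat \<Rightarrow> 'a set. (\<forall>k. ideal (L k) R \<and> P \<subseteq> L k \<and> L k \<subseteq> Q) \<and> (\<forall>k. L k \<subseteq> L (Suc k))
        \<longrightarrow> (\<exists>m. \<forall>k\<ge>m. L k = L m))"

lemma nonstab_strict:
  assumes "\<forall>k. L k \<subseteq> L (Suc k)" "\<not> (\<exists>m. \<forall>k\<ge>m. L k = L m)"
  shows "\<exists>\<sigma>. \<forall>k. L (\<sigma> k) \<subset> L (\<sigma> (Suc k))"
proof -
  have "\<forall>m. \<exists>k. L m \<subset> L k"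
  proof
    fix m
    obtain k where k: "k \<ge> m" "L k \<noteq> L m" using assms(2) by blast
    have "L m \<subseteq> L k" using lift_Suc_mono_le[of L, OF _ k(1)] assms(1) by blast
    with k show "\<exists>k. L m \<subset> L k" by blast
  qed
  then obtain nx where nx: "\<And>m. L m \<subset> L (nx m)" by metis
  define \<sigma> where "\<sigma> k = (nx ^^ k) 0" for k
  have "L (\<sigma> k) \<subset> L (\<sigma> (Suc k))" for k using nx[of "\<sigma> k"] by (simp add: \<sigma>_def)
  then show ?thesis by blast
qed

inductive_set mprods :: "('a, 'b) ring_scheme \<Rightarrow> 'a set set" for R where
  top: "carrier R \<in> mprods R"
| step: "P \<in> mprods R \<Longrightarrow> maximalideal M R \<Longrightarrow> ideal_prod R P M \<in> mprods R"

context cring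
begin

lemma idealI2:
  assumes sub: "I \<subseteq> carrier R" and z: "\<zero> \<in> I"
    and add: "\<And>a b. a \<in> I \<Longrightarrow> b \<in> I \<Longrightarrow> a \<oplus> b \<in> I"
    and mul: "\<And>a x. a \<in> I \<Longrightarrow> x \<in> carrier R \<Longrightarrow> x \<otimes> a \<in> I"
  shows "ideal I R"
proof (rule idealI)
  show "ring R" by (rule ring_axioms)
  have neg: "\<ominus> a \<in> I" if a: "a \<in> I" for a
  proof -
    have ac: "a \<in> carrier R" using a sub by blast
    have "\<ominus> a = (\<ominus> \<one>) \<otimes> a" using ac by (simp add: l_minus)
    then show ?thesis using mul[OF a] by simp
  qed
  show "subgroup I (add_monoid R)"
    by (rule add.subgroupI) (use sub z neg add in auto)
  show "\<And>a x. a \<in> I \<Longrightarrow> x \<in> carrier R \<Longrightarrow> x \<otimes> a \<in> I" by (rule mul)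
  show "\<And>a x. a \<in> I \<Longrightarrow> x \<in> carrier R \<Longrightarrow> a \<otimes> x \<in> I"
  proof -
    fix a x assume "a \<in> I" "x \<in> carrier R"
    moreover then have "a \<otimes> x = x \<otimes> a" using sub by (simp add: m_comm subsetD)
    ultimately show "a \<otimes> x \<in> I" using mul by simp
  qed
qed

lemma ideal_facts:
  assumes "ideal I R"
  shows "I \<subseteq> carrier R" "\<zero> \<in> I" "\<And>a b. a \<in> I \<Longrightarrow> b \<in> I \<Longrightarrow> a \<oplus> b \<in> I"
    "\<And>a x. a \<in> I \<Longrightarrow> x \<in> carrier R \<Longrightarrow> x \<otimes> a \<in> I"
    "\<And>a x. a \<in> I \<Longrightarrow> x \<in> carrier R \<Longrightarrow> a \<otimes> x \<in> I"
    "\<And>a. a \<in> I \<Longrightarrow> \<ominus> a \<in> I"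
    "\<And>a b. a \<in> I \<Longrightarrow> b \<in> I \<Longrightarrow> a \<ominus> b \<in> I"
proof -
  interpret ideal I R by fact
  show "I \<subseteq> carrier R" "\<zero> \<in> I" "\<And>a b. a \<in> I \<Longrightarrow> b \<in> I \<Longrightarrow> a \<oplus> b \<in> I"
    "\<And>a x. a \<in> I \<Longrightarrow> x \<in> carrier R \<Longrightarrow> x \<otimes> a \<in> I"
    "\<And>a x. a \<in> I \<Longrightarrow> x \<in> carrier R \<Longrightarrow> a \<otimes> x \<in> I"
    "\<And>a. a \<in> I \<Longrightarrow> \<ominus> a \<in> I"
    by (auto simp: a_subset I_l_closed I_r_closed a_inv_closed)
  show "\<And>a b. a \<in> I \<Longrightarrow> b \<in> I \<Longrightarrow> a \<ominus> b \<in> I"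
    by (simp add: a_minus_def a_inv_closed)
qed

lemma chain_union_ideal:
  assumes "C \<noteq> {}" "\<forall>I\<in>C. ideal I R" "\<forall>I\<in>C. \<forall>J\<in>C. I \<subseteq> J \<or> J \<subseteq> I"
  shows "ideal (\<Union>C) R"
proof (rule idealI2)
  show "\<Union>C \<subseteq> carrier R" using assms(2) ideal_facts(1) by blast
  show "\<zero> \<in> \<Union>C" using assms(1,2) ideal_facts(2) by blast
  show "a \<oplus> b \<in> \<Union>C" if ab: "a \<in> \<Union>C" "b \<in> \<Union>C" for a b
  proof -
    obtain I J where IJ: "I \<in> C" "J \<in> C" "a \<in> I" "b \<in> J" using ab by blast
    show ?thesis
    proof (cases "I \<subseteq> J")
      case True then show ?thesis using IJ assms(2) ideal_facts(3) by blast
    next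
      case False then have "J \<subseteq> I" using assms(3) IJ by blast
      then show ?thesis using IJ assms(2) ideal_facts(3) by blast
    qed
  qed
  show "x \<otimes> a \<in> \<Union>C" if "a \<in> \<Union>C" "x \<in> carrier R" for a x
    using that assms(2) ideal_facts(4) by blast
qed

lemma exists_maximal:
  assumes I: "ideal I R" and one: "\<one> \<notin> I"
  shows "\<exists>M. maximalideal M R \<and> I \<subseteq> M"
proof -
  define AA where "AA = {J. ideal J R \<and> I \<subseteq> J \<and> \<one> \<notin> J}"
  have "\<exists>M\<in>AA. \<forall>Z\<in>AA. M \<subseteq> Z \<longrightarrow> Z = M"
  proof (rule subset_Zorn_nonempty)
    show "AA \<noteq> {}" using I one by (auto simp: AA_def)
    fix C assume C: "C \<noteq> {}" "subset.chain AA C"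
    then have ch: "C \<subseteq> AA" "\<forall>Z1\<in>C. \<forall>Z2\<in>C. Z1 \<subseteq> Z2 \<or> Z2 \<subseteq> Z1" by (auto simp: subset_chain_def)
    have "ideal (\<Union>C) R" by (rule chain_union_ideal) (use C ch in \<open>auto simp: AA_def\<close>)
    moreover have "I \<subseteq> \<Union>C" using C(1) ch(1) unfolding AA_def by blast
    moreover have "\<one> \<notin> \<Union>C" using ch by (auto simp: AA_def)
    ultimately show "\<Union>C \<in> AA" by (simp add: AA_def)
  qed
  then obtain M where M: "M \<in> AA" "\<forall>Z\<in>AA. M \<subseteq> Z \<longrightarrow> Z = M" by blast
  have "maximalideal M R"
  proof (rule maximalidealI)
    show "ideal M R" using M by (simp add: AA_def)
    show "carrier R \<noteq> M" using M by (auto simp: AA_def)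
    fix J assume J: "ideal J R" "M \<subseteq> J" "J \<subseteq> carrier R"
    show "J = M \<or> J = carrier R"
    proof (cases "\<one> \<in> J")
      case True then show ?thesis using ideal.one_imp_carrier[OF J(1)] by blast
    next
      case False then show ?thesis using M J by (auto simp: AA_def)
    qed
  qed
  then show ?thesis using M by (auto simp: AA_def)
qed

lemma max_inv:
  assumes M: "maximalideal M R" and a: "a \<in> carrier R" "a \<notin> M"
  shows "\<exists>b\<in>carrier R. \<exists>y\<in>M. \<one> = y \<oplus> b \<otimes> a"
proof -
  have Mi: "ideal M R" using M maximalideal.axioms(1) by blast
  let ?J = "M <+>\<^bsub>R\<^esub> PIdl a"
  have J: "ideal ?J R" by (rule add_ideals[OF Mi cgenideal_ideal[OF a(1)]])
  have "M \<subseteq> ?J"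
  proof
    fix y assume y: "y \<in> M"
    have "y = y \<oplus> \<zero> \<otimes> a" using y a ideal_facts(1)[OF Mi] by auto
    then show "y \<in> ?J" using y a unfolding set_add_def' cgenideal_def by blast
  qed
  moreover have "a \<in> ?J"
  proof -
    have "a = \<zero> \<oplus> \<one> \<otimes> a" using a by simp
    then show ?thesis using a ideal_facts(2)[OF Mi] unfolding set_add_def' cgenideal_def by blast
  qed
  moreover have "?J \<subseteq> carrier R" using ideal_facts(1)[OF J] .
  ultimately have "?J = carrier R"
    using maximalideal.I_maximal[OF M J] a(2) by blast
  then have "\<one> \<in> ?J" by simp
  then show ?thesis unfolding set_add_def' cgenideal_def by blast
qed

lemma dcc_min:
  assumes dcc: "DCC R" and ne: "S \<noteq> {}" and id: "\<forall>I\<in>S. ideal I R"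
  shows "\<exists>I\<in>S. \<forall>J\<in>S. J \<subseteq> I \<longrightarrow> J = I"
proof (rule ccontr)
  assume "\<not> ?thesis"
  then have "\<forall>I\<in>S. \<exists>J. J \<in> S \<and> J \<subset> I" by blast
  then obtain nx where nx0: "\<forall>I\<in>S. nx I \<in> S \<and> nx I \<subset> I" by (rule bchoice[THEN exE])
  then have nx: "\<And>I. I \<in> S \<Longrightarrow> nx I \<in> S \<and> nx I \<subset> I" by blast
  obtain I0 where I0: "I0 \<in> S" using ne by blast
  define c where "c k = (nx ^^ k) I0" for k
  have cSuc: "c (Suc k) = nx (c k)" for k by (simp add: c_def)
  have cS: "c k \<in> S" for k
  proof (induction k)
    case 0 then show ?case using I0 by (simp add: c_def)
  next
    case (Suc k) then show ?case using nx[of "c k"] cSuc[of k] by simp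
  qed
  have cs: "c (Suc k) \<subset> c k" for k using nx[OF cS[of k]] cSuc[of k] by simp
  have pre: "(\<forall>k. ideal (c k) R) \<and> (\<forall>k. c (Suc k) \<subseteq> c k)" using cS cs id by blast
  have "\<forall>I :: nat \<Rightarrow> 'a set. (\<forall>k. ideal (I k) R) \<and> (\<forall>k. I (Suc k) \<subseteq> I k) \<longrightarrow> (\<exists>m. \<forall>k\<ge>m. I k = I m)"
    using dcc by (simp add: DCC_def)
  from this[rule_format, OF pre] have "\<exists>m. \<forall>k\<ge>m. c k = c m" .
  then obtain m where "\<forall>k\<ge>m. c k = c m" by blast
  then have "c (Suc m) = c m" by (drule_tac spec[of _ "Suc m"]) simp
  with cs[of m] show False by simp
qed

lemma acc_trans:
  assumes PQ: "ACCI R P Q" and QT: "ACCI R Q T" and Qi: "ideal Q R" and Ti: "ideal T R"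
    and sub: "P \<subseteq> Q" "Q \<subseteq> T"
  shows "ACCI R P T"
  unfolding ACCI_def
proof (intro allI impI)
  fix L :: "nat \<Rightarrow> 'a set"
  assume L: "(\<forall>k. ideal (L k) R \<and> P \<subseteq> L k \<and> L k \<subseteq> T) \<and> (\<forall>k. L k \<subseteq> L (Suc k))"
  have Li: "\<And>k. ideal (L k) R" and Lc: "\<And>k. L k \<subseteq> carrier R" using L ideal_facts(1) by blast+
  have mono: "L k \<subseteq> L k'" if "k \<le> k'" for k k'
    using lift_Suc_mono_le[of L, OF _ that] L by blast
  have "\<exists>m. \<forall>k\<ge>m. L k \<inter> Q = L m \<inter> Q"
    using PQ unfolding ACCI_def
    by (rule allE[where x="\<lambda>k. L k \<inter> Q"]) (use L sub Qi i_intersect in blast)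
  then obtain m1 where m1: "\<forall>k\<ge>m1. L k \<inter> Q = L m1 \<inter> Q" by blast
  have sumi: "ideal (L k <+>\<^bsub>R\<^esub> Q) R" for k by (rule add_ideals[OF Li Qi])
  have sumT: "L k <+>\<^bsub>R\<^esub> Q \<subseteq> T" for k
    using L ideal_facts(3)[OF Ti] sub unfolding set_add_def' by blast
  have sumQ: "Q \<subseteq> L k <+>\<^bsub>R\<^esub> Q" for k
  proof
    fix q assume q: "q \<in> Q"
    have "q = \<zero> \<oplus> q" using q ideal_facts(1)[OF Qi] by auto
    then show "q \<in> L k <+>\<^bsub>R\<^esub> Q" using q ideal_facts(2)[OF Li] unfolding set_add_def' by blast
  qed
  have summono: "L k <+>\<^bsub>R\<^esub> Q \<subseteq> L (Suc k) <+>\<^bsub>R\<^esub> Q" for k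
    using L unfolding set_add_def' by blast
  have "\<exists>m. \<forall>k\<ge>m. L k <+>\<^bsub>R\<^esub> Q = L m <+>\<^bsub>R\<^esub> Q"
    using QT unfolding ACCI_def
    by (rule allE[where x="\<lambda>k. L k <+>\<^bsub>R\<^esub> Q"]) (use sumi sumT sumQ summono in blast)
  then obtain m2 where m2: "\<forall>k\<ge>m2. L k <+>\<^bsub>R\<^esub> Q = L m2 <+>\<^bsub>R\<^esub> Q" by blast
  let ?M = "max m1 m2"
  show "\<exists>m. \<forall>k\<ge>m. L k = L m"
  proof (intro exI allI impI)
    fix k assume k: "k \<ge> ?M"
    show "L k = L ?M"
    proof
      show "L ?M \<subseteq> L k" using mono k by blast
      show "L k \<subseteq> L ?M"
      proof
        fix x assume x: "x \<in> L k"
        have xc: "x \<in> carrier R" using x Lc by blast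
        have "x = x \<oplus> \<zero>" using xc by simp
        then have "x \<in> L k <+>\<^bsub>R\<^esub> Q" using x ideal_facts(2)[OF Qi] unfolding set_add_def' by blast
        also have "L k <+>\<^bsub>R\<^esub> Q = L ?M <+>\<^bsub>R\<^esub> Q" using m2 k by (metis max.cobounded2 order_trans)
        finally obtain y q where yq: "y \<in> L ?M" "q \<in> Q" "x = y \<oplus> q" unfolding set_add_def' by blast
        have yc: "y \<in> carrier R" and qc: "q \<in> carrier R" using yq Lc ideal_facts(1)[OF Qi] by blast+
        have "y \<in> L k" using yq mono k by blast
        have "q = x \<ominus> y" using yq(3) yc qc by (simp add: a_minus_def a_ac r_neg)
        then have "q \<in> L k" using ideal_facts(7)[OF Li x \<open>y \<in> L k\<close>] by simp
        then have "q \<in> L k \<inter> Q" using yq by blast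
        also have "L k \<inter> Q = L ?M \<inter> Q" using m1 k by (metis max.cobounded1 order_trans)
        finally have "q \<in> L ?M" by blast
        then show "x \<in> L ?M" using yq ideal_facts(3)[OF Li] by simp
      qed
    qed
  qed
qed


lemma add_minus_cancel: "g \<in> carrier R \<Longrightarrow> t \<in> carrier R \<Longrightarrow> (g \<oplus> t) \<ominus> g = t"
  by (simp add: a_minus_def a_assoc a_lcomm[of g t] r_neg)

lemma sub_sum_PIdl:
  assumes "ideal I R" "a \<in> carrier R"
  shows "I \<subseteq> I <+>\<^bsub>R\<^esub> PIdl a"
proof
  fix x assume x: "x \<in> I"
  have xc: "x \<in> carrier R" using x ideal_facts(1)[OF assms(1)] by blast
  have "x = x \<oplus> \<zero> \<otimes> a" using xc assms(2) by simp
  then show "x \<in> I <+>\<^bsub>R\<^esub> PIdl a" using x assms(2) unfolding set_add_def' cgenideal_def by blast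
qed

lemma vs_false:
  assumes dcc: "DCC R" and M: "maximalideal M R" and Pi: "ideal P R" and Qi: "ideal Q R"
    and PQ: "\<forall>q\<in>Q. \<forall>y\<in>M. q \<otimes> y \<in> P"
    and L: "\<forall>k. ideal (L k) R \<and> P \<subseteq> L k \<and> L k \<subseteq> Q" and strict: "\<forall>k. L k \<subset> L (Suc k)"
  shows False
proof -
  have Li: "\<And>k. ideal (L k) R" using L by blast
  have PL: "\<And>k. P \<subseteq> L k" and LQ: "\<And>k. L k \<subseteq> Q" using L by blast+
  have step: "\<And>k. L k \<subseteq> L (Suc k)" using strict by blast
  have mono: "\<And>k k'. k \<le> k' \<Longrightarrow> L k \<subseteq> L k'" using lift_Suc_mono_le[of L, OF step] by blast
  have "\<forall>k. \<exists>w. w \<in> L (Suc k) \<and> w \<notin> L k" using strict by blast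
  from choice[OF this] obtain v where v0: "\<forall>k. v k \<in> L (Suc k) \<and> v k \<notin> L k" by blast
  have vL: "\<And>k. v k \<in> L (Suc k)" and vn: "\<And>k. v k \<notin> L k" using v0 by blast+
  have vc: "\<And>k. v k \<in> carrier R" using vL ideal_facts(1)[OF Li] by blast
  have vQ: "\<And>k. v k \<in> Q" using vL LQ by blast
  define G where "G j = rec_nat P (\<lambda>N g. if j \<le> N then g <+>\<^bsub>R\<^esub> PIdl (v N) else g)" for j
  have G0: "\<And>j. G j 0 = P" by (simp add: G_def)
  have GS: "\<And>j N. G j (Suc N) = (if j \<le> N then G j N <+>\<^bsub>R\<^esub> PIdl (v N) else G j N)" by (simp add: G_def)
  have Gi: "ideal (G j N) R" for j N
  proof (induction N)
    case 0 then show ?case by (simp add: G0 Pi)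
  next
    case (Suc N) then show ?case by (simp add: GS add_ideals cgenideal_ideal vc)
  qed
  have Gmono: "\<And>j N. G j N \<subseteq> G j (Suc N)"
    using GS sub_sum_PIdl[OF Gi vc] by simp
  have Gmono': "\<And>j N N'. N \<le> N' \<Longrightarrow> G j N \<subseteq> G j N'"
    using lift_Suc_mono_le[of "G _", OF Gmono] by blast
  have GL: "G j N \<subseteq> L N" for j N
  proof (induction N)
    case 0 then show ?case by (simp add: G0 PL)
  next
    case (Suc N)
    show ?case
    proof (cases "j \<le> N")
      case True
      have "G j N <+>\<^bsub>R\<^esub> PIdl (v N) \<subseteq> L (Suc N)"
      proof
        fix x assume "x \<in> G j N <+>\<^bsub>R\<^esub> PIdl (v N)"
        then obtain g a where ga: "g \<in> G j N" "a \<in> carrier R" "x = g \<oplus> a \<otimes> v N"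
          unfolding set_add_def' cgenideal_def by blast
        have "g \<in> L (Suc N)" using ga(1) Suc.IH step by blast
        moreover have "a \<otimes> v N \<in> L (Suc N)" using ideal_facts(4)[OF Li vL ga(2)] .
        ultimately show "x \<in> L (Suc N)" using ga(3) ideal_facts(3)[OF Li] by simp
      qed
      then show ?thesis using True GS by simp
    next
      case False then show ?thesis using GS Suc.IH step by (simp, blast)
    qed
  qed
  have GSj: "G (Suc j) N \<subseteq> G j N" for j N
  proof (induction N)
    case 0 then show ?case by (simp add: G0)
  next
    case (Suc N)
    show ?case
    proof (cases "Suc j \<le> N")
      case True
      then have "j \<le> N" by simp
      then show ?thesis using True GS Suc.IH unfolding set_add_def' by auto
    next
      case False
      then have "G (Suc j) (Suc N) = G (Suc j) N" using GS by simp
      also have "\<dots> \<subseteq> G j N" by (rule Suc.IH)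
      also have "\<dots> \<subseteq> G j (Suc N)" by (rule Gmono)
      finally show ?thesis .
    qed
  qed
  define W where "W j = (\<Union>N. G j N)" for j
  have Wi: "ideal (W j) R" for j
    unfolding W_def
  proof (rule chain_union_ideal)
    show "range (G j) \<noteq> {}" by simp
    show "\<forall>I\<in>range (G j). ideal I R" using Gi by blast
    show "\<forall>I\<in>range (G j). \<forall>J\<in>range (G j). I \<subseteq> J \<or> J \<subseteq> I"
      using Gmono' nat_le_linear by blast
  qed
  have Wdesc: "W (Suc j) \<subseteq> W j" for j using GSj unfolding W_def by blast
  have vW: "v j \<in> W j" for j
  proof -
    have "v j = \<zero> \<oplus> \<one> \<otimes> v j" using vc by simp
    moreover have "\<zero> \<in> G j j" using ideal_facts(2)[OF Gi] .
    ultimately have "v j \<in> G j j <+>\<^bsub>R\<^esub> PIdl (v j)"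
      unfolding set_add_def' cgenideal_def by blast
    then have "v j \<in> G j (Suc j)" using GS by simp
    then show ?thesis unfolding W_def by blast
  qed
  have key: "\<And>x. x \<in> G (Suc j) N \<Longrightarrow> x \<in> L (Suc j) \<Longrightarrow> x \<in> P" for j N
  proof (induction N)
    case 0 then show ?case by (simp add: G0)
  next
    case (Suc N)
    show ?case
    proof (cases "Suc j \<le> N")
      case False
      then show ?thesis using Suc.prems Suc.IH GS by simp
    next
      case True
      have "x \<in> G (Suc j) N <+>\<^bsub>R\<^esub> PIdl (v N)" using Suc.prems(1) True GS by simp
      then obtain g a where ga: "g \<in> G (Suc j) N" "a \<in> carrier R" "x = g \<oplus> a \<otimes> v N"
        unfolding set_add_def' cgenideal_def by blast
      have gc: "g \<in> carrier R" using ga(1) ideal_facts(1)[OF Gi] by blast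
      have avc: "a \<otimes> v N \<in> carrier R" using ga(2) vc by simp
      have gLN: "g \<in> L N" using ga(1) GL by blast
      have xLN: "x \<in> L N" using Suc.prems(2) mono[OF True] by blast
      have "a \<otimes> v N = x \<ominus> g" using ga(3) gc avc add_minus_cancel by simp
      then have avL: "a \<otimes> v N \<in> L N" using ideal_facts(7)[OF Li xLN gLN] by simp
      have aM: "a \<in> M"
      proof (rule ccontr)
        assume "a \<notin> M"
        then obtain b y where hb: "b \<in> carrier R" "y \<in> M" "\<one> = y \<oplus> b \<otimes> a"
          using max_inv[OF M ga(2)] by blast
        have yc: "y \<in> carrier R" using hb(2) M maximalideal.axioms(1) ideal_facts(1) by blast
        have "v N = \<one> \<otimes> v N" using vc by simp
        also have "\<dots> = y \<otimes> v N \<oplus> b \<otimes> (a \<otimes> v N)"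
          using hb yc ga(2) vc by (simp add: l_distr m_assoc)
        finally have eq: "v N = y \<otimes> v N \<oplus> b \<otimes> (a \<otimes> v N)" .
        have "y \<otimes> v N = v N \<otimes> y" using yc vc by (simp add: m_comm)
        then have "y \<otimes> v N \<in> P" using PQ vQ hb(2) by simp
        then have "y \<otimes> v N \<in> L N" using PL by blast
        moreover have "b \<otimes> (a \<otimes> v N) \<in> L N" using ideal_facts(4)[OF Li avL hb(1)] .
        ultimately have "v N \<in> L N" using eq ideal_facts(3)[OF Li] by metis
        then show False using vn by blast
      qed
      have "a \<otimes> v N = v N \<otimes> a" using ga(2) vc by (simp add: m_comm)
      then have avP: "a \<otimes> v N \<in> P" using PQ vQ aM by simp
      have "g = x \<ominus> a \<otimes> v N" using ga(3) gc avc by (simp add: a_minus_def a_ac r_neg)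
      moreover have "a \<otimes> v N \<in> L (Suc j)" using avP PL by blast
      ultimately have "g \<in> L (Suc j)" using ideal_facts(7)[OF Li Suc.prems(2)] by simp
      then have "g \<in> P" using Suc.IH ga(1) by blast
      then show ?thesis using ga(3) avP ideal_facts(3)[OF Pi] by simp
    qed
  qed
  have vnW: "v j \<notin> W (Suc j)" for j
  proof
    assume "v j \<in> W (Suc j)"
    then obtain N where "v j \<in> G (Suc j) N" unfolding W_def by blast
    then have "v j \<in> P" using key vL by blast
    then show False using PL vn by blast
  qed
  have pre: "(\<forall>k. ideal (W k) R) \<and> (\<forall>k. W (Suc k) \<subseteq> W k)" using Wi Wdesc by blast
  have "\<forall>I :: nat \<Rightarrow> 'a set. (\<forall>k. ideal (I k) R) \<and> (\<forall>k. I (Suc k) \<subseteq> I k) \<longrightarrow> (\<exists>m. \<forall>k\<ge>m. I k = I m)"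
    using dcc by (simp add: DCC_def)
  from this[rule_format, OF pre] obtain m where "\<forall>k\<ge>m. W k = W m" by blast
  then have "W (Suc m) = W m" by (drule_tac spec[of _ "Suc m"]) simp
  then show False using vW[of m] vnW[of m] by simp
qed


lemma mprods_ideal_acc:
  assumes dcc: "DCC R"
  shows "P \<in> mprods R \<Longrightarrow> ideal P R \<and> ACCI R P (carrier R)"
proof (induction P rule: mprods.induct)
  case top
  have "ACCI R (carrier R) (carrier R)"
    unfolding ACCI_def by (intro allI impI exI[of _ 0]) blast
  then show ?case using oneideal by blast
next
  case (step P M)
  have Pi: "ideal P R" and accP: "ACCI R P (carrier R)" using step.IH by blast+
  have Mi: "ideal M R" using step.hyps(2) maximalideal.axioms(1) by blast
  let ?PM = "ideal_prod R P M"
  have PMi: "ideal ?PM R" by (rule ideal_prod_is_ideal[OF Pi Mi])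
  have PMsub: "?PM \<subseteq> P" using ideal_prod_inter[OF Pi Mi] by blast
  have PQ: "\<forall>q\<in>P. \<forall>y\<in>M. q \<otimes> y \<in> ?PM" by (auto intro: ideal_prod.prod)
  have acc1: "ACCI R ?PM P"
    unfolding ACCI_def
  proof (intro allI impI)
    fix L :: "nat \<Rightarrow> 'a set"
    assume L: "(\<forall>k. ideal (L k) R \<and> ?PM \<subseteq> L k \<and> L k \<subseteq> P) \<and> (\<forall>k. L k \<subseteq> L (Suc k))"
    show "\<exists>m. \<forall>k\<ge>m. L k = L m"
    proof (rule ccontr)
      assume ns: "\<not> (\<exists>m. \<forall>k\<ge>m. L k = L m)"
      obtain \<sigma> where \<sigma>: "\<forall>k. L (\<sigma> k) \<subset> L (\<sigma> (Suc k))" using nonstab_strict[OF _ ns] L by blast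
      show False
        by (rule vs_false[OF dcc step.hyps(2) PMi Pi PQ, of "\<lambda>k. L (\<sigma> k)"]) (use L \<sigma> in auto)
    qed
  qed
  have "ACCI R ?PM (carrier R)"
    by (rule acc_trans[OF acc1 accP Pi oneideal PMsub]) (use Pi ideal_facts(1) in blast)
  then show ?case using PMi by blast
qed

lemma artinian_ACC:
  assumes dcc: "DCC R"
  shows "ACCI R {\<zero>} (carrier R)"
proof -
  have allid: "\<forall>I\<in>mprods R. ideal I R" using mprods_ideal_acc[OF dcc] by blast
  obtain P where P: "P \<in> mprods R" and Pmin: "\<forall>J\<in>mprods R. J \<subseteq> P \<longrightarrow> J = P"
    using dcc_min[OF dcc _ allid] mprods.top by blast
  have Pi: "ideal P R" using allid P by blast
  have PM: "ideal_prod R P M = P" if M: "maximalideal M R" for M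
  proof -
    have Mi: "ideal M R" using M maximalideal.axioms(1) by blast
    have "ideal_prod R P M \<in> mprods R" by (rule mprods.step[OF P M])
    moreover have "ideal_prod R P M \<subseteq> P" using ideal_prod_inter[OF Pi Mi] by blast
    ultimately show ?thesis using Pmin by blast
  qed
  have P0: "P = {\<zero>}"
  proof (rule ccontr)
    assume "P \<noteq> {\<zero>}"
    then obtain p where p: "p \<in> P" "p \<noteq> \<zero>" using ideal_facts(2)[OF Pi] by blast
    define S where "S = {L. ideal L R \<and> (\<exists>x\<in>L. \<exists>p\<in>P. x \<otimes> p \<noteq> \<zero>)}"
    have pc: "p \<in> carrier R" using p ideal_facts(1)[OF Pi] by blast
    have "\<one> \<otimes> p \<noteq> \<zero>" using p pc by simp
    then have "carrier R \<in> S" unfolding S_def using oneideal p(1) one_closed by blast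
    then have Sne: "S \<noteq> {}" by blast
    have Sid: "\<forall>I\<in>S. ideal I R" unfolding S_def by blast
    obtain L0 where L0: "L0 \<in> S" and L0min: "\<forall>J\<in>S. J \<subseteq> L0 \<longrightarrow> J = L0"
      using dcc_min[OF dcc Sne Sid] by blast
    obtain x p0 where x: "x \<in> L0" "p0 \<in> P" "x \<otimes> p0 \<noteq> \<zero>" using L0 unfolding S_def by blast
    have L0i: "ideal L0 R" using L0 Sid by blast
    have xc: "x \<in> carrier R" using x(1) ideal_facts(1)[OF L0i] by blast
    have p0c: "p0 \<in> carrier R" using x(2) ideal_facts(1)[OF Pi] by blast
    have PIsub: "PIdl x \<subseteq> L0" by (rule cgenideal_minimal[OF L0i x(1)])
    have "PIdl x \<in> S" unfolding S_def using cgenideal_ideal[OF xc] cgenideal_self[OF xc] x by blast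
    then have PIeq: "PIdl x = L0" using L0min PIsub by blast
    have claim: "\<exists>y\<in>M. x = x \<otimes> y" if M: "maximalideal M R" for M
    proof -
      have Mi: "ideal M R" using M maximalideal.axioms(1) by blast
      have Mc: "M \<subseteq> carrier R" using ideal_facts(1)[OF Mi] .
      define xM where "xM = {x \<otimes> y | y. y \<in> M}"
      have xMi: "ideal xM R"
      proof (rule idealI2)
        show "xM \<subseteq> carrier R" unfolding xM_def using xc Mc by blast
        have "\<zero> = x \<otimes> \<zero>" using xc by simp
        then show "\<zero> \<in> xM" unfolding xM_def using ideal_facts(2)[OF Mi] by blast
        fix a b assume "a \<in> xM" "b \<in> xM"
        then obtain y1 y2 where y: "y1 \<in> M" "y2 \<in> M" "a = x \<otimes> y1" "b = x \<otimes> y2" unfolding xM_def by blast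
        then have "a \<oplus> b = x \<otimes> (y1 \<oplus> y2)" using xc Mc by (simp add: r_distr subsetD)
        then show "a \<oplus> b \<in> xM" unfolding xM_def using ideal_facts(3)[OF Mi y(1,2)] by blast
      next
        fix a z assume "a \<in> xM" "z \<in> carrier R"
        then obtain y where y: "y \<in> M" "a = x \<otimes> y" "z \<in> carrier R" unfolding xM_def by blast
        then have "z \<otimes> a = x \<otimes> (z \<otimes> y)" using xc Mc by (simp add: m_lcomm subsetD)
        then show "z \<otimes> a \<in> xM" unfolding xM_def using ideal_facts(4)[OF Mi y(1) y(3)] by blast
      qed
      have xMsub: "xM \<subseteq> L0"
      proof
        fix z assume "z \<in> xM"
        then obtain y where y: "y \<in> M" "z = x \<otimes> y" unfolding xM_def by blast
        then have "z = y \<otimes> x" using xc Mc by (simp add: m_comm subsetD)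
        then show "z \<in> L0" using PIeq y Mc unfolding cgenideal_def by blast
      qed
      have "xM \<in> S"
      proof (rule ccontr)
        assume "xM \<notin> S"
        then have kill: "\<forall>y\<in>M. \<forall>q\<in>P. (x \<otimes> y) \<otimes> q = \<zero>" using xMi unfolding S_def xM_def by blast
        have "\<And>s. s \<in> ideal_prod R P M \<Longrightarrow> x \<otimes> s = \<zero>"
        proof -
          fix s assume "s \<in> ideal_prod R P M"
          then show "x \<otimes> s = \<zero>"
          proof (induction s rule: ideal_prod.induct)
            case (prod i j)
            have ic: "i \<in> carrier R" and jc: "j \<in> carrier R"
              using prod ideal_facts(1)[OF Pi] Mc by blast+
            have "x \<otimes> (i \<otimes> j) = (x \<otimes> j) \<otimes> i" using ic jc xc by (simp add: m_ac)
            then show ?case using kill prod by simp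
          next
            case (sum s1 s2)
            have "s1 \<in> carrier R" "s2 \<in> carrier R"
              using sum.hyps ideal_prod_in_carrier[OF Pi Mi] by blast+
            then show ?case using sum.IH xc by (simp add: r_distr)
          qed
        qed
        then have "x \<otimes> p0 = \<zero>" using x(2) PM[OF M] by blast
        then show False using x(3) by simp
      qed
      then have "xM = L0" using L0min xMsub by blast
      then have "x \<in> xM" using x(1) by simp
      then show ?thesis unfolding xM_def by blast
    qed
    define Ann where "Ann = {a \<in> carrier R. a \<otimes> x = \<zero>}"
    have Anni: "ideal Ann R"
    proof (rule idealI2)
      show "Ann \<subseteq> carrier R" unfolding Ann_def by blast
      show "\<zero> \<in> Ann" unfolding Ann_def using xc by simp
      fix a b assume "a \<in> Ann" "b \<in> Ann"
      then show "a \<oplus> b \<in> Ann" unfolding Ann_def using xc by (simp add: l_distr)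
    next
      fix a z assume "a \<in> Ann" "z \<in> carrier R"
      then show "z \<otimes> a \<in> Ann" unfolding Ann_def using xc by (simp add: m_assoc)
    qed
    have "x \<noteq> \<zero>" using x(3) p0c by auto
    then have "\<one> \<notin> Ann" unfolding Ann_def using xc by simp
    then obtain M where M: "maximalideal M R" "Ann \<subseteq> M" using exists_maximal[OF Anni] by blast
    have Mi: "ideal M R" using M maximalideal.axioms(1) by blast
    obtain y where y: "y \<in> M" "x = x \<otimes> y" using claim[OF M(1)] by blast
    have yc: "y \<in> carrier R" using y(1) ideal_facts(1)[OF Mi] by blast
    have "(\<one> \<ominus> y) \<otimes> x = x \<ominus> x \<otimes> y" using xc yc by (simp add: a_minus_def l_distr l_minus m_comm[of y x])
    also have "\<dots> = \<zero>" using y(2) xc yc by (simp add: r_neg a_minus_def)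
    finally have "\<one> \<ominus> y \<in> Ann" unfolding Ann_def using yc by simp
    then have "\<one> \<ominus> y \<in> M" using M by blast
    then have "(\<one> \<ominus> y) \<oplus> y \<in> M" using ideal_facts(3)[OF Mi _ y(1)] by blast
    moreover have "(\<one> \<ominus> y) \<oplus> y = \<one>" using yc by (simp add: a_minus_def a_assoc l_neg)
    ultimately have "\<one> \<in> M" by simp
    then have "M = carrier R" using ideal.one_imp_carrier[OF Mi] by blast
    then show False using maximalideal.I_notcarr[OF M(1)] by simp
  qed
  show ?thesis using mprods_ideal_acc[OF dcc P] P0 by simp
qed

end



fun msp :: "('a, 'b) ring_scheme \<Rightarrow> 'a set \<Rightarrow> 'a list \<Rightarrow> 'a set" where
  "msp R R0 [] = {\<zero>\<^bsub>R\<^esub>}"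
| "msp R R0 (x # xs) = {c \<otimes>\<^bsub>R\<^esub> x \<oplus>\<^bsub>R\<^esub> y | c y. c \<in> R0 \<and> y \<in> msp R R0 xs}"

definition submod :: "('a, 'b) ring_scheme \<Rightarrow> 'a set \<Rightarrow> 'a set \<Rightarrow> bool" where
  "submod R R0 N \<longleftrightarrow> N \<subseteq> carrier R \<and> \<zero>\<^bsub>R\<^esub> \<in> N \<and> (\<forall>a\<in>N. \<forall>b\<in>N. a \<oplus>\<^bsub>R\<^esub> b \<in> N)
     \<and> (\<forall>c\<in>R0. \<forall>a\<in>N. c \<otimes>\<^bsub>R\<^esub> a \<in> N)"

locale rsub = cring R for R (structure) +
  fixes R0 assumes R0: "subring R0 R"
begin

lemma R0c: "R0 \<subseteq> carrier R" using subringE(1)[OF R0] .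
lemma R0_one: "\<one> \<in> R0" using subringE(3)[OF R0] .
lemma R0_zero: "\<zero> \<in> R0" using subringE(2)[OF R0] .
lemma R0_neg: "c \<in> R0 \<Longrightarrow> \<ominus> c \<in> R0" using subringE(5)[OF R0] .
lemma R0_add: "c \<in> R0 \<Longrightarrow> d \<in> R0 \<Longrightarrow> c \<oplus> d \<in> R0" using subringE(7)[OF R0] .
lemma R0_mult: "c \<in> R0 \<Longrightarrow> d \<in> R0 \<Longrightarrow> c \<otimes> d \<in> R0" using subringE(6)[OF R0] .
lemma R0_carr: "c \<in> R0 \<Longrightarrow> c \<in> carrier R" using R0c by blast

lemma submodD:
  assumes "submod R R0 N"
  shows "N \<subseteq> carrier R" "\<zero> \<in> N" "\<And>a b. a \<in> N \<Longrightarrow> b \<in> N \<Longrightarrow> a \<oplus> b \<in> N"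
    "\<And>c a. c \<in> R0 \<Longrightarrow> a \<in> N \<Longrightarrow> c \<otimes> a \<in> N"
  using assms unfolding submod_def by blast+

lemma submod_neg:
  assumes "submod R R0 N" "a \<in> N"
  shows "\<ominus> a \<in> N"
proof -
  have ac: "a \<in> carrier R" using submodD(1)[OF assms(1)] assms(2) by blast
  have "\<ominus> a = (\<ominus> \<one>) \<otimes> a" using ac by (simp add: l_minus)
  then show ?thesis using submodD(4)[OF assms(1) R0_neg[OF R0_one] assms(2)] by simp
qed

lemma submod_minus:
  assumes "submod R R0 N" "a \<in> N" "b \<in> N"
  shows "a \<ominus> b \<in> N"
  unfolding a_minus_def using submodD(3)[OF assms(1) assms(2) submod_neg[OF assms(1,3)]] .

lemma submod_finsum:
  assumes N: "submod R R0 N" and fin: "finite A"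
  shows "(\<forall>i\<in>A. f i \<in> N) \<Longrightarrow> finsum R f A \<in> N"
  using fin
proof (induction A rule: finite_induct)
  case empty then show ?case using submodD(2)[OF N] by simp
next
  case (insert a A)
  have fc: "f \<in> insert a A \<rightarrow> carrier R" using insert.prems submodD(1)[OF N] by blast
  have "finsum R f (insert a A) = f a \<oplus> finsum R f A"
    by (rule finsum_insert) (use insert fc in auto)
  then show ?case using insert submodD(3)[OF N] by simp
qed

lemma msp_submod: "set xs \<subseteq> carrier R \<Longrightarrow> submod R R0 (msp R R0 xs)"
proof (induction xs)
  case Nil then show ?case using R0c by (auto simp: submod_def)
next
  case (Cons x xs)
  have xc: "x \<in> carrier R" using Cons.prems by simp
  have IH: "submod R R0 (msp R R0 xs)" using Cons by simp
  note D = submodD[OF IH]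
  show ?case unfolding submod_def
  proof (intro conjI ballI)
    show "msp R R0 (x # xs) \<subseteq> carrier R" using D(1) xc R0c by auto
    have "\<zero> = \<zero> \<otimes> x \<oplus> \<zero>" using xc by simp
    then show "\<zero> \<in> msp R R0 (x # xs)" using R0_zero D(2) by auto
  next
    fix a b assume "a \<in> msp R R0 (x # xs)" "b \<in> msp R R0 (x # xs)"
    then obtain c y c' y' where cy: "c \<in> R0" "y \<in> msp R R0 xs" "a = c \<otimes> x \<oplus> y"
      "c' \<in> R0" "y' \<in> msp R R0 xs" "b = c' \<otimes> x \<oplus> y'" by auto
    have cc: "c \<in> carrier R" "c' \<in> carrier R" using cy R0c by blast+
    have yc: "y \<in> carrier R" "y' \<in> carrier R" using cy D(1) by blast+
    have "a \<oplus> b = (c \<oplus> c') \<otimes> x \<oplus> (y \<oplus> y')"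
      using cy cc yc xc by (simp add: l_distr a_ac)
    then show "a \<oplus> b \<in> msp R R0 (x # xs)" unfolding msp.simps using R0_add[OF cy(1) cy(4)] D(3)[OF cy(2) cy(5)] by blast
  next
    fix d a assume d: "d \<in> R0" and "a \<in> msp R R0 (x # xs)"
    then obtain c y where cy: "c \<in> R0" "y \<in> msp R R0 xs" "a = c \<otimes> x \<oplus> y" by auto
    have cc: "c \<in> carrier R" "d \<in> carrier R" using cy d R0c by blast+
    have yc: "y \<in> carrier R" using cy D(1) by blast
    have "d \<otimes> a = (d \<otimes> c) \<otimes> x \<oplus> d \<otimes> y"
      using cy cc yc xc by (simp add: r_distr m_assoc)
    then show "d \<otimes> a \<in> msp R R0 (x # xs)" unfolding msp.simps using R0_mult[OF d cy(1)] D(4)[OF d cy(2)] by blast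
  qed
qed

lemma msp_gens: "set xs \<subseteq> carrier R \<Longrightarrow> set xs \<subseteq> msp R R0 xs"
proof (induction xs)
  case Nil then show ?case by simp
next
  case (Cons x xs)
  have xc: "x \<in> carrier R" using Cons.prems by simp
  have IH: "set xs \<subseteq> msp R R0 xs" using Cons by simp
  have sub: "submod R R0 (msp R R0 xs)" using msp_submod Cons.prems by simp
  have "x = \<one> \<otimes> x \<oplus> \<zero>" using xc by simp
  then have "x \<in> msp R R0 (x # xs)" using R0_one submodD(2)[OF sub] by auto
  moreover have "y \<in> msp R R0 (x # xs)" if "y \<in> set xs" for y
  proof -
    have yc: "y \<in> carrier R" using that Cons.prems by auto
    have "y = \<zero> \<otimes> x \<oplus> y" using xc yc by simp
    then show ?thesis using R0_zero IH that by auto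
  qed
  ultimately show ?case by auto
qed

lemma msp_least: "submod R R0 N \<Longrightarrow> set xs \<subseteq> N \<Longrightarrow> msp R R0 xs \<subseteq> N"
proof (induction xs)
  case Nil then show ?case using submodD(2) by simp
next
  case (Cons x xs)
  then have IH: "msp R R0 xs \<subseteq> N" by simp
  show ?case
  proof
    fix a assume "a \<in> msp R R0 (x # xs)"
    then obtain c y where cy: "c \<in> R0" "y \<in> msp R R0 xs" "a = c \<otimes> x \<oplus> y" by auto
    have "c \<otimes> x \<in> N" using submodD(4)[OF Cons.prems(1) cy(1)] Cons.prems(2) by simp
    then show "a \<in> N" using cy IH submodD(3)[OF Cons.prems(1)] by blast
  qed
qed

lemma msp_mult_closed:
  assumes c: "c \<in> carrier R" and xs: "set xs \<subseteq> carrier R"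
    and gens: "\<forall>g\<in>set xs. c \<otimes> g \<in> msp R R0 xs"
  shows "\<forall>w\<in>msp R R0 xs. c \<otimes> w \<in> msp R R0 xs"
proof -
  let ?N = "{w \<in> carrier R. c \<otimes> w \<in> msp R R0 xs}"
  have sub: "submod R R0 (msp R R0 xs)" by (rule msp_submod[OF xs])
  note D = submodD[OF sub]
  have "submod R R0 ?N" unfolding submod_def
  proof (intro conjI ballI)
    show "?N \<subseteq> carrier R" by blast
    show "\<zero> \<in> ?N" using c D(2) by simp
  next
    fix a b assume "a \<in> ?N" "b \<in> ?N"
    then show "a \<oplus> b \<in> ?N" using c D(3) by (simp add: r_distr)
  next
    fix d a assume "d \<in> R0" "a \<in> ?N"
    moreover then have "c \<otimes> (d \<otimes> a) = d \<otimes> (c \<otimes> a)" using c R0c by (simp add: m_lcomm subsetD)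
    ultimately show "d \<otimes> a \<in> ?N" using D(4) R0c by (auto simp: subsetD)
  qed
  moreover have "set xs \<subseteq> ?N" using gens xs by blast
  ultimately show ?thesis using msp_least by blast
qed

lemma msp_prod:
  assumes xs: "set xs \<subseteq> carrier R" and ys: "set ys \<subseteq> carrier R"
    and m: "m \<in> msp R R0 xs" and nn: "nn \<in> msp R R0 ys"
  shows "m \<otimes> nn \<in> msp R R0 (concat (map (\<lambda>x. map (\<lambda>y. x \<otimes> y) ys) xs))"
proof -
  let ?zs = "concat (map (\<lambda>x. map (\<lambda>y. x \<otimes> y) ys) xs)"
  have zs: "set ?zs \<subseteq> carrier R" using xs ys by auto
  have subz: "submod R R0 (msp R R0 ?zs)" by (rule msp_submod[OF zs])
  note D = submodD[OF subz]
  have zg: "set ?zs \<subseteq> msp R R0 ?zs" by (rule msp_gens[OF zs])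
  have step1: "msp R R0 xs \<subseteq> {m \<in> carrier R. m \<otimes> y \<in> msp R R0 ?zs}" if y: "y \<in> set ys" for y
  proof (rule msp_least)
    have yc: "y \<in> carrier R" using y ys by blast
    show "submod R R0 {m \<in> carrier R. m \<otimes> y \<in> msp R R0 ?zs}" unfolding submod_def
    proof (intro conjI ballI)
      show "{m \<in> carrier R. m \<otimes> y \<in> msp R R0 ?zs} \<subseteq> carrier R" by blast
      show "\<zero> \<in> {m \<in> carrier R. m \<otimes> y \<in> msp R R0 ?zs}" using yc D(2) by simp
    next
      fix a b assume "a \<in> {m \<in> carrier R. m \<otimes> y \<in> msp R R0 ?zs}" "b \<in> {m \<in> carrier R. m \<otimes> y \<in> msp R R0 ?zs}"
      then show "a \<oplus> b \<in> {m \<in> carrier R. m \<otimes> y \<in> msp R R0 ?zs}" using yc D(3) by (simp add: l_distr)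
    next
      fix d a assume "d \<in> R0" "a \<in> {m \<in> carrier R. m \<otimes> y \<in> msp R R0 ?zs}"
      moreover then have "(d \<otimes> a) \<otimes> y = d \<otimes> (a \<otimes> y)" using yc R0c by (simp add: m_assoc subsetD)
      ultimately show "d \<otimes> a \<in> {m \<in> carrier R. m \<otimes> y \<in> msp R R0 ?zs}" using D(4) R0c by (auto simp: subsetD)
    qed
    show "set xs \<subseteq> {m \<in> carrier R. m \<otimes> y \<in> msp R R0 ?zs}"
      using xs zg y by auto
  qed
  have mc: "m \<in> carrier R" using m submodD(1)[OF msp_submod[OF xs]] by blast
  have "msp R R0 ys \<subseteq> {n \<in> carrier R. m \<otimes> n \<in> msp R R0 ?zs}"
  proof (rule msp_least)
    show "submod R R0 {n \<in> carrier R. m \<otimes> n \<in> msp R R0 ?zs}" unfolding submod_def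
    proof (intro conjI ballI)
      show "{n \<in> carrier R. m \<otimes> n \<in> msp R R0 ?zs} \<subseteq> carrier R" by blast
      show "\<zero> \<in> {n \<in> carrier R. m \<otimes> n \<in> msp R R0 ?zs}" using mc D(2) by simp
    next
      fix a b assume "a \<in> {n \<in> carrier R. m \<otimes> n \<in> msp R R0 ?zs}" "b \<in> {n \<in> carrier R. m \<otimes> n \<in> msp R R0 ?zs}"
      then show "a \<oplus> b \<in> {n \<in> carrier R. m \<otimes> n \<in> msp R R0 ?zs}" using mc D(3) by (simp add: r_distr)
    next
      fix d a assume "d \<in> R0" "a \<in> {n \<in> carrier R. m \<otimes> n \<in> msp R R0 ?zs}"
      moreover then have "m \<otimes> (d \<otimes> a) = d \<otimes> (m \<otimes> a)" using mc R0c by (simp add: m_lcomm subsetD)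
      ultimately show "d \<otimes> a \<in> {n \<in> carrier R. m \<otimes> n \<in> msp R R0 ?zs}" using D(4) R0c by (auto simp: subsetD)
    qed
    show "set ys \<subseteq> {n \<in> carrier R. m \<otimes> n \<in> msp R R0 ?zs}"
      using step1 m ys by blast
  qed
  then show ?thesis using nn by blast
qed


lemma integral_gens:
  fixes d :: nat and c :: "nat \<Rightarrow> 'a"
  assumes e: "e \<in> carrier R" and cR0: "\<forall>i<d. c i \<in> R0"
    and eq: "e [^] d \<oplus> (\<Oplus>i\<in>{..<d}. c i \<otimes> e [^] i) = \<zero>"
  shows "\<exists>ys. set ys \<subseteq> carrier R \<and> \<one> \<in> msp R R0 ys \<and> (\<forall>w\<in>msp R R0 ys. e \<otimes> w \<in> msp R R0 ys)"
proof -
  define ys where "ys = map (\<lambda>i. e [^] i) [0..<d]"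
  have ysc: "set ys \<subseteq> carrier R" using e by (auto simp: ys_def)
  have sub: "submod R R0 (msp R R0 ys)" by (rule msp_submod[OF ysc])
  have gens: "set ys \<subseteq> msp R R0 ys" by (rule msp_gens[OF ysc])
  have pw: "e [^] i \<in> msp R R0 ys" if "i < d" for i using gens that by (auto simp: ys_def)
  have cc: "c i \<in> carrier R" if "i < d" for i using cR0 that R0c by blast
  have Sc: "(\<Oplus>i\<in>{..<d}. c i \<otimes> e [^] i) \<in> carrier R"
    by (rule finsum_closed) (use cc e in auto)
  have Sm: "(\<Oplus>i\<in>{..<d}. c i \<otimes> e [^] i) \<in> msp R R0 ys"
    by (rule submod_finsum[OF sub]) (use cR0 pw submodD(4)[OF sub] in auto)
  have "\<ominus> (\<Oplus>i\<in>{..<d}. c i \<otimes> e [^] i) = e [^] d"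
    by (rule minus_equality[OF eq Sc]) (use e in simp)
  then have edm: "e [^] d \<in> msp R R0 ys" using submod_neg[OF sub Sm] by simp
  have one: "\<one> \<in> msp R R0 ys"
  proof (cases "d = 0")
    case True
    then have "\<one> = \<zero>" using eq by simp
    then show ?thesis using submodD(2)[OF sub] by simp
  next
    case False
    then show ?thesis using pw[of 0] by simp
  qed
  have "\<forall>w\<in>msp R R0 ys. e \<otimes> w \<in> msp R R0 ys"
  proof (rule msp_mult_closed[OF e ysc], rule ballI)
    fix g assume "g \<in> set ys"
    then obtain i where i: "i < d" "g = e [^] i" by (auto simp: ys_def)
    have "e \<otimes> g = e [^] Suc i" using i e by (simp add: m_comm)
    moreover have "e [^] Suc i \<in> msp R R0 ys"
    proof (cases "Suc i < d")
      case True then show ?thesis using pw by blast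
    next
      case False then have "Suc i = d" using i by simp
      then show ?thesis using edm by simp
    qed
    ultimately show "e \<otimes> g \<in> msp R R0 ys" by simp
  qed
  then show ?thesis using ysc one by blast
qed

lemma fg_module:
  assumes fin: "finite E" and integ: "integral_over R R0"
  shows "E \<subseteq> carrier R \<Longrightarrow> \<exists>xs. set xs \<subseteq> carrier R \<and> \<one> \<in> msp R R0 xs \<and> (\<forall>e\<in>E. \<forall>w\<in>msp R R0 xs. e \<otimes> w \<in> msp R R0 xs)"
  using fin
proof (induction E rule: finite_induct)
  case empty
  have "\<one> = \<one> \<otimes> \<one> \<oplus> \<zero>" by simp
  then have "\<one> \<in> msp R R0 [\<one>]" unfolding msp.simps using R0_one by blast
  then show ?case by (intro exI[of _ "[\<one>]"]) auto
next
  case (insert e F)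
  have ec: "e \<in> carrier R" using insert.prems by blast
  obtain xs where xs: "set xs \<subseteq> carrier R" "\<one> \<in> msp R R0 xs" "\<forall>e\<in>F. \<forall>w\<in>msp R R0 xs. e \<otimes> w \<in> msp R R0 xs"
    using insert by blast
  obtain d :: nat and c where dc: "\<forall>i<d. c i \<in> R0" "e [^] d \<oplus> (\<Oplus>i\<in>{..<d}. c i \<otimes> e [^] i) = \<zero>"
    using integ ec unfolding integral_over_def by blast
  obtain ys where ys: "set ys \<subseteq> carrier R" "\<one> \<in> msp R R0 ys" "\<forall>w\<in>msp R R0 ys. e \<otimes> w \<in> msp R R0 ys"
    using integral_gens[OF ec dc] by blast
  define zs where "zs = concat (map (\<lambda>x. map (\<lambda>y. x \<otimes> y) ys) xs)"
  have zsc: "set zs \<subseteq> carrier R" using xs ys by (auto simp: zs_def)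
  have xg: "set xs \<subseteq> msp R R0 xs" by (rule msp_gens[OF xs(1)])
  have yg: "set ys \<subseteq> msp R R0 ys" by (rule msp_gens[OF ys(1)])
  have "\<one> \<otimes> \<one> \<in> msp R R0 zs" unfolding zs_def by (rule msp_prod[OF xs(1) ys(1) xs(2) ys(2)])
  then have one: "\<one> \<in> msp R R0 zs" by simp
  have cl: "\<forall>w\<in>msp R R0 zs. e' \<otimes> w \<in> msp R R0 zs" if e': "e' \<in> insert e F" for e'
  proof -
    have e'c: "e' \<in> carrier R" using e' insert.prems by blast
    show ?thesis
    proof (rule msp_mult_closed[OF e'c zsc], rule ballI)
    fix g assume "g \<in> set zs"
    then obtain x y where xy: "x \<in> set xs" "y \<in> set ys" "g = x \<otimes> y" by (auto simp: zs_def)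
    have xc: "x \<in> carrier R" and yc: "y \<in> carrier R" using xy xs ys by blast+
    show "e' \<otimes> g \<in> msp R R0 zs"
    proof (cases "e' = e")
      case True
      have "e' \<otimes> g = x \<otimes> (e \<otimes> y)" using xy xc yc ec True by (simp add: m_lcomm)
      moreover have "e \<otimes> y \<in> msp R R0 ys" using ys(3) yg xy(2) by blast
      moreover have "x \<in> msp R R0 xs" using xg xy(1) by blast
      ultimately show ?thesis using msp_prod[OF xs(1) ys(1)] unfolding zs_def by simp
    next
      case False
      then have "e' \<in> F" using e' by blast
      have "e' \<otimes> g = (e' \<otimes> x) \<otimes> y" using xy xc yc e'c by (simp add: m_assoc)
      moreover have "e' \<otimes> x \<in> msp R R0 xs" using xs(3) \<open>e' \<in> F\<close> xg xy(1) by blast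
      moreover have "y \<in> msp R R0 ys" using yg xy(2) by blast
      ultimately show ?thesis using msp_prod[OF xs(1) ys(1)] unfolding zs_def by simp
    qed
  qed
  qed
  show ?case using zsc one cl by blast
qed

lemma gen_sub_msp:
  assumes fin: "finite E" and Ec: "E \<subseteq> carrier R" and integ: "integral_over R R0"
  shows "\<exists>xs. set xs \<subseteq> carrier R \<and> generate_ring R (R0 \<union> E) \<subseteq> msp R R0 xs"
proof -
  obtain xs where xs: "set xs \<subseteq> carrier R" "\<one> \<in> msp R R0 xs" "\<forall>e\<in>E. \<forall>w\<in>msp R R0 xs. e \<otimes> w \<in> msp R R0 xs"
    using fg_module[OF fin integ Ec] by blast
  have sub: "submod R R0 (msp R R0 xs)" by (rule msp_submod[OF xs(1)])
  note D = submodD[OF sub]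
  define T where "T = {r \<in> carrier R. \<forall>w\<in>msp R R0 xs. r \<otimes> w \<in> msp R R0 xs}"
  have Tsub: "subring T R"
  proof (rule subringI)
    show "T \<subseteq> carrier R" unfolding T_def by blast
    show "\<one> \<in> T" unfolding T_def using D(1) by auto
    fix h assume h: "h \<in> T"
    show "\<ominus> h \<in> T" unfolding T_def
    proof (intro CollectI conjI ballI)
      show "\<ominus> h \<in> carrier R" using h unfolding T_def by blast
      fix w assume w: "w \<in> msp R R0 xs"
      have "\<ominus> h \<otimes> w = \<ominus> (h \<otimes> w)" using h w D(1) unfolding T_def by (auto simp: l_minus)
      then show "\<ominus> h \<otimes> w \<in> msp R R0 xs" using submod_neg[OF sub] h w unfolding T_def by auto
    qed
  next
    fix h1 h2 assume h: "h1 \<in> T" "h2 \<in> T"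
    show "h1 \<otimes> h2 \<in> T" unfolding T_def
    proof (intro CollectI conjI ballI)
      show "h1 \<otimes> h2 \<in> carrier R" using h unfolding T_def by blast
      fix w assume w: "w \<in> msp R R0 xs"
      have "h1 \<otimes> h2 \<otimes> w = h1 \<otimes> (h2 \<otimes> w)" using h w D(1) unfolding T_def by (auto simp: m_assoc)
      then show "h1 \<otimes> h2 \<otimes> w \<in> msp R R0 xs" using h w unfolding T_def by auto
    qed
    show "h1 \<oplus> h2 \<in> T" unfolding T_def
    proof (intro CollectI conjI ballI)
      show "h1 \<oplus> h2 \<in> carrier R" using h unfolding T_def by blast
      fix w assume w: "w \<in> msp R R0 xs"
      have "(h1 \<oplus> h2) \<otimes> w = h1 \<otimes> w \<oplus> h2 \<otimes> w" using h w D(1) unfolding T_def by (auto simp: l_distr)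
      then show "(h1 \<oplus> h2) \<otimes> w \<in> msp R R0 xs" using h w D(3) unfolding T_def by auto
    qed
  qed
  have "R0 \<subseteq> T" unfolding T_def using R0c D(4) by blast
  moreover have "E \<subseteq> T" unfolding T_def using Ec xs(3) by blast
  ultimately have "generate_ring R (R0 \<union> E) \<subseteq> T"
    using generate_ring_min_subring1[OF _ Tsub] R0c Ec by blast
  moreover have "T \<subseteq> msp R R0 xs"
  proof
    fix r assume "r \<in> T"
    then have "r \<otimes> \<one> \<in> msp R R0 xs" "r \<in> carrier R" using xs(2) unfolding T_def by blast+
    then show "r \<in> msp R R0 xs" by simp
  qed
  ultimately show ?thesis using xs(1) by blast
qed

lemma submod_Int: "submod R R0 A \<Longrightarrow> submod R R0 B \<Longrightarrow> submod R R0 (A \<inter> B)"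
  unfolding submod_def by blast

lemma msp_acc:
  assumes acc0: "\<forall>I :: nat \<Rightarrow> 'a set. (\<forall>k. ideal (I k) (R\<lparr>carrier := R0\<rparr>)) \<and> (\<forall>k. I k \<subseteq> I (Suc k)) \<longrightarrow> (\<exists>m. \<forall>k\<ge>m. I k = I m)"
  shows "set xs \<subseteq> carrier R \<Longrightarrow> (\<forall>k. submod R R0 (N k) \<and> N k \<subseteq> msp R R0 xs) \<Longrightarrow> (\<forall>k. N k \<subseteq> N (Suc k)) \<Longrightarrow> \<exists>m. \<forall>k\<ge>m. N k = N m"
proof (induction xs arbitrary: N)
  case Nil
  have "N k = {\<zero>}" for k using Nil.prems(2) submodD(2) by fastforce
  then show ?case by simp
next
  case (Cons x xs)
  have xc: "x \<in> carrier R" using Cons.prems(1) by simp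
  let ?Q = "msp R R0 xs"
  have Qs: "submod R R0 ?Q" using msp_submod Cons.prems(1) by simp
  have Ns: "\<And>k. submod R R0 (N k)" and Nsub: "\<And>k. N k \<subseteq> msp R R0 (x # xs)" using Cons.prems by blast+
  have step: "\<And>k. N k \<subseteq> N (Suc k)" using Cons.prems by blast
  have mono: "\<And>k k'. k \<le> k' \<Longrightarrow> N k \<subseteq> N k'" using lift_Suc_mono_le[of N, OF step] by blast
  have "\<exists>m. \<forall>k\<ge>m. N k \<inter> ?Q = N m \<inter> ?Q"
    by (rule Cons.IH) (use Cons.prems(1) Ns submod_Int[OF _ Qs] step in auto)
  then obtain m1 where m1: "\<forall>k\<ge>m1. N k \<inter> ?Q = N m1 \<inter> ?Q" by blast
  define I where "I k = {a \<in> R0. \<exists>y\<in>?Q. a \<otimes> x \<oplus> y \<in> N k}" for k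
  have cB: "cring (R\<lparr>carrier := R0\<rparr>)" using subcring_iff[OF R0c] subcringI'[OF R0] by blast
  have Ii: "ideal (I k) (R\<lparr>carrier := R0\<rparr>)" for k
  proof (rule cring.idealI2[OF cB])
    note D = submodD[OF Ns[of k]] and DQ = submodD[OF Qs]
    show "I k \<subseteq> carrier (R\<lparr>carrier := R0\<rparr>)" unfolding I_def by auto
    have "\<zero> \<otimes> x \<oplus> \<zero> \<in> N k" using xc D(2) by simp
    then show "\<zero>\<^bsub>R\<lparr>carrier := R0\<rparr>\<^esub> \<in> I k" unfolding I_def using R0_zero DQ(2) by auto
  next
    note D = submodD[OF Ns[of k]] and DQ = submodD[OF Qs]
    fix a b assume "a \<in> I k" "b \<in> I k"
    then obtain y y' where yy: "a \<in> R0" "y \<in> ?Q" "a \<otimes> x \<oplus> y \<in> N k" "b \<in> R0" "y' \<in> ?Q" "b \<otimes> x \<oplus> y' \<in> N k"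
      unfolding I_def by blast
    have c: "a \<in> carrier R" "b \<in> carrier R" "y \<in> carrier R" "y' \<in> carrier R" using yy R0c DQ(1) by blast+
    have "(a \<oplus> b) \<otimes> x \<oplus> (y \<oplus> y') = (a \<otimes> x \<oplus> y) \<oplus> (b \<otimes> x \<oplus> y')"
      using c xc by (simp add: l_distr a_ac)
    then have "(a \<oplus> b) \<otimes> x \<oplus> (y \<oplus> y') \<in> N k" using D(3) yy by simp
    then show "a \<oplus>\<^bsub>R\<lparr>carrier := R0\<rparr>\<^esub> b \<in> I k" unfolding I_def using R0_add yy DQ(3) by auto
  next
    note D = submodD[OF Ns[of k]] and DQ = submodD[OF Qs]
    fix a r assume "a \<in> I k" and r: "r \<in> carrier (R\<lparr>carrier := R0\<rparr>)"
    then obtain y where yy: "a \<in> R0" "y \<in> ?Q" "a \<otimes> x \<oplus> y \<in> N k" unfolding I_def by blast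
    have rR: "r \<in> R0" using r by simp
    have c: "a \<in> carrier R" "r \<in> carrier R" "y \<in> carrier R" using yy rR R0c DQ(1) by blast+
    have "(r \<otimes> a) \<otimes> x \<oplus> r \<otimes> y = r \<otimes> (a \<otimes> x \<oplus> y)"
      using c xc by (simp add: r_distr m_assoc)
    then have "(r \<otimes> a) \<otimes> x \<oplus> r \<otimes> y \<in> N k" using D(4)[OF rR yy(3)] by simp
    then show "r \<otimes>\<^bsub>R\<lparr>carrier := R0\<rparr>\<^esub> a \<in> I k" unfolding I_def using R0_mult[OF rR yy(1)] DQ(4)[OF rR yy(2)] by auto
  qed
  have Imono: "I k \<subseteq> I (Suc k)" for k unfolding I_def using step by blast
  have "(\<forall>k. ideal (I k) (R\<lparr>carrier := R0\<rparr>)) \<and> (\<forall>k. I k \<subseteq> I (Suc k))" using Ii Imono by blast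
  from acc0[rule_format, OF this] obtain m2 where m2: "\<forall>k\<ge>m2. I k = I m2" by blast
  let ?M = "max m1 m2"
  show ?case
  proof (intro exI allI impI)
    fix k assume k: "k \<ge> ?M"
    show "N k = N ?M"
    proof
      show "N ?M \<subseteq> N k" using mono k by blast
      show "N k \<subseteq> N ?M"
      proof
        fix z assume z: "z \<in> N k"
        then have "z \<in> msp R R0 (x # xs)" using Nsub by blast
        then obtain a y where ay: "a \<in> R0" "y \<in> ?Q" "z = a \<otimes> x \<oplus> y" by auto
        have "a \<in> I k" unfolding I_def using ay z by blast
        moreover have "I k = I ?M"
        proof -
          have "I k = I m2" using m2 k by (meson max.boundedE)
          moreover have "I ?M = I m2" using m2 by (meson max.cobounded2)
          ultimately show ?thesis by simp
        qed
        ultimately obtain y' where y': "y' \<in> ?Q" "a \<otimes> x \<oplus> y' \<in> N ?M" unfolding I_def by blast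
        have c: "a \<in> carrier R" "y \<in> carrier R" "y' \<in> carrier R" using ay y' R0c submodD(1)[OF Qs] by blast+
        have inNk: "a \<otimes> x \<oplus> y' \<in> N k" using y' mono k by blast
        have zdiff: "z \<ominus> (a \<otimes> x \<oplus> y') = y \<ominus> y'"
          using c xc ay(3) by (simp add: a_minus_def minus_add a_ac r_neg)
        moreover have "z \<ominus> (a \<otimes> x \<oplus> y') \<in> N k" using submod_minus[OF Ns z inNk] .
        moreover have "y \<ominus> y' \<in> ?Q" using submod_minus[OF Qs ay(2) y'(1)] .
        ultimately have "y \<ominus> y' \<in> N k \<inter> ?Q" by simp
        moreover have "N k \<inter> ?Q = N ?M \<inter> ?Q"
        proof -
          have "N k \<inter> ?Q = N m1 \<inter> ?Q" using m1 k by (meson max.boundedE)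
          moreover have "N ?M \<inter> ?Q = N m1 \<inter> ?Q" using m1 by (meson max.cobounded1)
          ultimately show ?thesis by simp
        qed
        ultimately have yy: "y \<ominus> y' \<in> N ?M" by blast
        have zc: "z \<in> carrier R" using ay(3) c xc by simp
        have "z = (a \<otimes> x \<oplus> y') \<oplus> (z \<ominus> (a \<otimes> x \<oplus> y'))"
          using zc c xc by (simp add: a_minus_def a_lcomm[of "a \<otimes> x \<oplus> y'" z] r_neg)
        then have "z = (a \<otimes> x \<oplus> y') \<oplus> (y \<ominus> y')" using zdiff by simp
        then show "z \<in> N ?M" using submodD(3)[OF Ns y'(2) yy] by simp
      qed
    qed
  qed
qed

end



lemma (in ring) subring_finsum:
  assumes H: "subring H R" and fin: "finite A"
  shows "(\<forall>i\<in>A. f i \<in> H) \<Longrightarrow> finsum R f A \<in> H"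
  using fin
proof (induction A rule: finite_induct)
  case empty then show ?case using subringE(2)[OF H] by simp
next
  case (insert a A)
  have fc: "f \<in> insert a A \<rightarrow> carrier R" using insert.prems subringE(1)[OF H] by blast
  have "finsum R f (insert a A) = f a \<oplus> finsum R f A"
    by (rule finsum_insert) (use insert fc in auto)
  then show ?case using insert subringE(7)[OF H] by simp
qed

lemma (in cring) main_aux:
  assumes a3: "subring R0 R"
    and a4: "artinian (R\<lparr>carrier := R0\<rparr>)"
    and a5: "integral_over R R0"
    and a6: "n \<ge> 1"
    and a7: "\<not> noetherian R"
  shows "\<not> noetherian ((PS R n)\<lparr>carrier := artinian_PS R R0 n\<rparr>)
         \<and> artinian_PS R R0 n \<subset> carrier (PS R n)"
proof -
  interpret rsub R R0 by (intro rsub.intro rsub_axioms.intro cring_axioms a3)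
  let ?B = "R\<lparr>carrier := R0\<rparr>"
  let ?S = "artinian_PS R R0 n"
  have cB: "cring ?B" using subcring_iff[OF R0c] subcringI'[OF R0] by blast
  have dccB: "DCC ?B" using a4 unfolding artinian_def DCC_def by blast
  have accB: "ACCI ?B {\<zero>\<^bsub>?B\<^esub>} (carrier ?B)" by (rule cring.artinian_ACC[OF cB dccB])
  have acc0: "\<forall>I :: nat \<Rightarrow> 'a set. (\<forall>k. ideal (I k) ?B) \<and> (\<forall>k. I k \<subseteq> I (Suc k)) \<longrightarrow> (\<exists>m. \<forall>k\<ge>m. I k = I m)"
  proof (intro allI impI)
    fix I :: "nat \<Rightarrow> 'a set"
    assume I: "(\<forall>k. ideal (I k) ?B) \<and> (\<forall>k. I k \<subseteq> I (Suc k))"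
    have "\<forall>k. ideal (I k) ?B \<and> {\<zero>\<^bsub>?B\<^esub>} \<subseteq> I k \<and> I k \<subseteq> carrier ?B"
      using I cring.ideal_facts(1,2)[OF cB] by blast
    then show "\<exists>m. \<forall>k\<ge>m. I k = I m" using accB I unfolding ACCI_def by blast
  qed
  have fgD: "\<exists>E. finite E \<and> E \<subseteq> carrier R \<and> Ra = generate_ring R (R0 \<union> E)"
    if "Ra \<in> fg_family R R0" for Ra using that by (auto simp: fg_family_def)
  have fgI: "generate_ring R (R0 \<union> E) \<in> fg_family R R0" if "finite E" "E \<subseteq> carrier R" for E
    using that by (auto simp: fg_family_def)
  have gsub: "subring (generate_ring R (R0 \<union> E)) R" if "E \<subseteq> carrier R" for E
    by (rule generate_ring_is_subring) (use that R0c in blast)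
  have gR0: "R0 \<subseteq> generate_ring R (R0 \<union> E)" for E by (auto intro: generate_ring.incl)
  have gE: "E \<subseteq> generate_ring R (R0 \<union> E)" for E by (auto intro: generate_ring.incl)
  from a7 obtain I where I: "\<forall>k. ideal (I k) R" "\<forall>k. I k \<subseteq> I (Suc k)" "\<not> (\<exists>m. \<forall>k\<ge>m. I k = I m)"
    unfolding noetherian_def by blast
  have Imono: "\<And>k k'. k \<le> k' \<Longrightarrow> I k \<subseteq> I k'" using lift_Suc_mono_le[of I] I(2) by blast
  have Ic: "\<And>k. I k \<subseteq> carrier R" using I(1) ideal_facts(1) by blast
  have grow: "\<exists>k x. k \<ge> m \<and> x \<in> I k \<and> x \<notin> I m" for m
  proof -
    obtain k where k: "k \<ge> m" "I k \<noteq> I m" using I(3) by blast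
    then have "I m \<subseteq> I k" using Imono by blast
    then show ?thesis using k by blast
  qed
  have Ssub: "?S \<subseteq> carrier (PS R n)" unfolding artinian_PS_def by blast
  have Sneq: "?S \<noteq> carrier (PS R n)"
  proof
    assume eq: "?S = carrier (PS R n)"
    have "\<forall>m. \<exists>x. (\<exists>k. x \<in> I k) \<and> x \<notin> I m" using grow by blast
    from choice[OF this] obtain s where s: "\<And>m. (\<exists>k. s m \<in> I k) \<and> s m \<notin> I m" by blast
    have sc: "s m \<in> carrier R" for m using s Ic by blast
    define f where "f t = (if (\<forall>i. i \<noteq> 0 \<longrightarrow> t i = 0) then s (t 0) else \<zero>)" for t :: "nat \<Rightarrow> nat"
    have "f \<in> carrier (PS R n)"
      unfolding PS_carrier
    proof (intro conjI allI impI)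
      fix t show "f t \<in> carrier R" using sc by (simp add: f_def)
    next
      fix t :: "nat \<Rightarrow> nat" assume "t \<notin> expvec n"
      then obtain i where "i \<ge> n" "t i \<noteq> 0" by (auto simp: expvec_def)
      then have "i \<noteq> 0" using a6 by auto
      then show "f t = \<zero>" using \<open>t i \<noteq> 0\<close> unfolding f_def by auto
    qed
    then have "f \<in> ?S" using eq by simp
    then obtain Ra where Ra: "Ra \<in> fg_family R R0" "\<forall>t. f t \<in> Ra" unfolding artinian_PS_def by blast
    obtain E where E: "finite E" "E \<subseteq> carrier R" "Ra = generate_ring R (R0 \<union> E)" using fgD[OF Ra(1)] by blast
    obtain xs where xs: "set xs \<subseteq> carrier R" "Ra \<subseteq> msp R R0 xs"
      using gen_sub_msp[OF E(1) E(2) a5] E(3) by blast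
    have sRa: "s j \<in> Ra" for j
    proof -
      have "f (\<lambda>i. if i = 0 then j else 0) = s j" by (simp add: f_def)
      then show ?thesis using Ra(2) by metis
    qed
    have Rasub: "subring Ra R" using gsub[OF E(2)] E(3) by simp
    have R0Ra: "R0 \<subseteq> Ra" using gR0 E(3) by simp
    define N where "N k = I k \<inter> Ra" for k
    have Ns: "submod R R0 (N k)" for k
      unfolding submod_def N_def
    proof (intro conjI ballI)
      show "I k \<inter> Ra \<subseteq> carrier R" using Ic by blast
      show "\<zero> \<in> I k \<inter> Ra" using ideal_facts(2)[OF I(1)[rule_format]] subringE(2)[OF Rasub] by blast
    next
      fix a b assume "a \<in> I k \<inter> Ra" "b \<in> I k \<inter> Ra"
      then show "a \<oplus> b \<in> I k \<inter> Ra" using ideal_facts(3)[OF I(1)[rule_format]] subringE(7)[OF Rasub] by blast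
    next
      fix c a assume "c \<in> R0" "a \<in> I k \<inter> Ra"
      then show "c \<otimes> a \<in> I k \<inter> Ra"
        using ideal_facts(4)[OF I(1)[rule_format]] subringE(6)[OF Rasub] R0Ra R0c by blast
    qed
    have "\<exists>m. \<forall>k\<ge>m. N k = N m"
      by (rule msp_acc[OF acc0 xs(1)]) (use Ns xs(2) I(2) in \<open>auto simp: N_def\<close>)
    then obtain m where m: "\<forall>k\<ge>m. N k = N m" by blast
    obtain k0 where k0: "s m \<in> I k0" using s by blast
    let ?K = "max k0 m"
    have "s m \<in> I ?K" using k0 Imono[of k0 ?K] by auto
    then have "s m \<in> N ?K" using sRa unfolding N_def by blast
    moreover have "N ?K = N m" using m by (meson max.cobounded2)
    ultimately have "s m \<in> I m" unfolding N_def by blast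
    then show False using s by blast
  qed
  interpret P: cring "PS R n" by (rule PS_cring)
  have Sone: "\<one>\<^bsub>PS R n\<^esub> \<in> ?S"
  proof -
    have "generate_ring R (R0 \<union> {}) \<in> fg_family R R0" by (rule fgI) auto
    moreover have "\<forall>m. \<one>\<^bsub>PS R n\<^esub> m \<in> generate_ring R (R0 \<union> {})"
      by (simp add: PS_one generate_ring.one zero_in_generate)
    ultimately show ?thesis unfolding artinian_PS_def using P.one_closed by blast
  qed
  have Sdest: "\<exists>E. finite E \<and> E \<subseteq> carrier R \<and> (\<forall>m. f m \<in> generate_ring R (R0 \<union> E))" if "f \<in> ?S" for f
    using that fgD unfolding artinian_PS_def by blast
  have Sintro: "f \<in> ?S" if "f \<in> carrier (PS R n)" "finite E" "E \<subseteq> carrier R" "\<forall>m. f m \<in> generate_ring R (R0 \<union> E)" for f E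
    using that fgI unfolding artinian_PS_def by blast
  have Ssubring: "subring ?S (PS R n)"
  proof (rule P.subringI)
    show "?S \<subseteq> carrier (PS R n)" by (rule Ssub)
    show "\<one>\<^bsub>PS R n\<^esub> \<in> ?S" by (rule Sone)
  next
    fix h assume h: "h \<in> ?S"
    then obtain E where E: "finite E" "E \<subseteq> carrier R" "\<forall>m. h m \<in> generate_ring R (R0 \<union> E)" using Sdest by blast
    have hc: "h \<in> carrier (PS R n)" using h Ssub by blast
    show "\<ominus>\<^bsub>PS R n\<^esub> h \<in> ?S"
      by (rule Sintro[OF P.a_inv_closed[OF hc] E(1,2)]) (use E(3) in \<open>simp add: PS_a_inv[OF hc] generate_ring.a_inv\<close>)
  next
    fix h1 h2 assume h: "h1 \<in> ?S" "h2 \<in> ?S"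
    obtain E1 where E1: "finite E1" "E1 \<subseteq> carrier R" "\<forall>m. h1 m \<in> generate_ring R (R0 \<union> E1)" using Sdest h(1) by blast
    obtain E2 where E2: "finite E2" "E2 \<subseteq> carrier R" "\<forall>m. h2 m \<in> generate_ring R (R0 \<union> E2)" using Sdest h(2) by blast
    let ?G = "generate_ring R (R0 \<union> (E1 \<union> E2))"
    have Gs: "subring ?G R" using gsub E1(2) E2(2) by blast
    have G1: "generate_ring R (R0 \<union> E1) \<subseteq> ?G" by (rule mono_generate_ring) (use R0c E1(2) E2(2) in auto)
    have G2: "generate_ring R (R0 \<union> E2) \<subseteq> ?G" by (rule mono_generate_ring) (use R0c E1(2) E2(2) in auto)
    have c1: "\<forall>m. h1 m \<in> ?G" and c2: "\<forall>m. h2 m \<in> ?G" using E1(3) E2(3) G1 G2 by blast+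
    have hc: "h1 \<in> carrier (PS R n)" "h2 \<in> carrier (PS R n)" using h Ssub by blast+
    have fin12: "finite (E1 \<union> E2)" "E1 \<union> E2 \<subseteq> carrier R" using E1 E2 by auto
    show "h1 \<otimes>\<^bsub>PS R n\<^esub> h2 \<in> ?S"
    proof (rule Sintro[OF P.m_closed[OF hc] fin12], rule allI)
      fix m
      show "(h1 \<otimes>\<^bsub>PS R n\<^esub> h2) m \<in> ?G"
      proof (cases "m \<in> expvec n")
        case True
        have "(\<Oplus>a\<in>dset m. h1 a \<otimes> h2 (\<lambda>i. m i - a i)) \<in> ?G"
          by (rule subring_finsum[OF Gs finite_dset[OF True]]) (use c1 c2 subringE(6)[OF Gs] in blast)
        then show ?thesis using True by (simp add: PS_mult)
      next
        case False then show ?thesis using subringE(2)[OF Gs] by (simp add: PS_mult)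
      qed
    qed
    show "h1 \<oplus>\<^bsub>PS R n\<^esub> h2 \<in> ?S"
      by (rule Sintro[OF P.a_closed[OF hc] fin12]) (use c1 c2 subringE(7)[OF Gs] in \<open>simp add: PS_add\<close>)
  qed
  let ?S' = "(PS R n)\<lparr>carrier := ?S\<rparr>"
  have crS: "cring ?S'" using P.subcring_iff[OF Ssub] P.subcringI'[OF Ssubring] by blast
  define J where "J k = {f \<in> ?S. f (\<lambda>i. 0) \<in> I k}" for k
  have Ji: "ideal (J k) ?S'" for k
  proof (rule cring.idealI2[OF crS])
    note Ik = ideal_facts[OF I(1)[rule_format, of k]]
    show "J k \<subseteq> carrier ?S'" unfolding J_def by auto
    show "\<zero>\<^bsub>?S'\<^esub> \<in> J k" unfolding J_def using subringE(2)[OF Ssubring] Ik(2) by (simp add: PS_zero)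
  next
    note Ik = ideal_facts[OF I(1)[rule_format, of k]]
    fix a b assume "a \<in> J k" "b \<in> J k"
    then show "a \<oplus>\<^bsub>?S'\<^esub> b \<in> J k" unfolding J_def using subringE(7)[OF Ssubring] Ik(3) by (simp add: PS_add)
  next
    note Ik = ideal_facts[OF I(1)[rule_format, of k]]
    fix a x assume a: "a \<in> J k" and x: "x \<in> carrier ?S'"
    have ac: "a \<in> carrier (PS R n)" and xc: "x \<in> carrier (PS R n)" using a x Ssub unfolding J_def by auto
    have "(x \<otimes>\<^bsub>PS R n\<^esub> a) (\<lambda>i. 0) = x (\<lambda>i. 0) \<otimes> a (\<lambda>i. 0)" by (rule PS_mult_zero_coeff[OF xc ac])
    moreover have "x (\<lambda>i. 0) \<otimes> a (\<lambda>i. 0) \<in> I k" using a Ik(4) PS_coeff[OF xc] unfolding J_def by blast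
    moreover have "x \<otimes>\<^bsub>PS R n\<^esub> a \<in> ?S" using subringE(6)[OF Ssubring] a x unfolding J_def by simp
    ultimately show "x \<otimes>\<^bsub>?S'\<^esub> a \<in> J k" unfolding J_def by simp
  qed
  have Jmono: "J k \<subseteq> J (Suc k)" for k unfolding J_def using I(2) by blast
  have Jns: "\<not> (\<exists>m. \<forall>k\<ge>m. J k = J m)"
  proof
    assume "\<exists>m. \<forall>k\<ge>m. J k = J m"
    then obtain m where m: "\<forall>k\<ge>m. J k = J m" by blast
    obtain k x where kx: "k \<ge> m" "x \<in> I k" "x \<notin> I m" using grow by blast
    have xc: "x \<in> carrier R" using kx Ic by blast
    define cx where "cx t = (if \<forall>i. t i = 0 then x else \<zero>)" for t :: "nat \<Rightarrow> nat"
    have cxc: "cx \<in> carrier (PS R n)"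
      unfolding PS_carrier
    proof (intro conjI allI impI)
      fix t show "cx t \<in> carrier R" using xc by (simp add: cx_def)
    next
      fix t :: "nat \<Rightarrow> nat" assume "t \<notin> expvec n"
      then have "\<not> (\<forall>i. t i = 0)" by (auto simp: expvec_def)
      then show "cx t = \<zero>" unfolding cx_def by (rule if_not_P)
    qed
    have "cx \<in> ?S"
      by (rule Sintro[OF cxc, of "{x}"]) (use xc in \<open>auto simp: cx_def intro: generate_ring.incl zero_in_generate\<close>)
    then have "cx \<in> J k" "cx \<notin> J m" using kx unfolding J_def by (auto simp: cx_def)
    moreover have "J k = J m" using m kx(1) by blast
    ultimately show False by simp
  qed
  have "\<not> noetherian ?S'"
    unfolding noetherian_def using Ji Jmono Jns by blast
  then show ?thesis using Ssub Sneq by blast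
qed

theorem mainTheorem1:
  fixes R :: "('a, 'b) ring_scheme" and R0 :: "'a set" and n :: nat
  assumes "cring R"
    and "krull_dim_zero R"
    and "subring R0 R"
    and "artinian (R\<lparr>carrier := R0\<rparr>)"
    and "integral_over R R0"
    and "n \<ge> 1"
    and "\<not> noetherian R"
  shows "\<not> noetherian ((PS R n)\<lparr>carrier := artinian_PS R R0 n\<rparr>)
         \<and> artinian_PS R R0 n \<subset> carrier (PS R n)"
  by (rule cring.main_aux[OF assms(1) assms(3) assms(4) assms(5) assms(6) assms(7)])


end
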